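(* Let $g\ge1$ and let $\ell$ be a prime with $\ell\nmid 2g$. For any integer $t$ and any real $z>0$: (i) the sets $\mathcal{C}^{ss}(\ell,t)$ and $\mathcal{C}^{ss}(\ell,|t|\le z)$ are non-empty and stable under conjugation by elements of $\operatorname{GSp}_{2g}(\mathbb{F}_\ell)$; (ii) the sets $\mathcal{C}_B(\ell,t)$ and $\mathcal{C}_B(\ell,|t|\le z)$ are non-empty and stable under conjugation by elements of $B_{2g}(\mathbb{F}_\ell)$; (iii) every element of $\mathcal{C}^{ss}(\ell,t)\cup\mathcal{C}^{ss}(\ell,|t|\le z)$ is conjugate over $\operatorname{GSp}_{2g}(\mathbb{F}_\ell)$ to some element of $B_{2g}(\mathbb{F}_\ell)$; (iv) $U_{2g}(\mathbb{F}_\ell)\,\mathcal{C}_B(\ell,t)\subseteq\mathcal{C}_B(\ell,t)$, $U'_{2g}(\mathbb{F}_\ell)\,\mathcal{C}_B(\ell,0)\subseteq\mathcal{C}_B(\ell,0)$, and $U_{2g}(\mathbb{F}_\ell)\,\mathcal{C}_B(\ell,|t|\le z)\subseteq\mathcal{C}_B(\ell,|t|\le z)$.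
   Context: $\operatorname{GSp}_{2g}(\mathbb{F}_\ell)=\{M\in\operatorname{GL}_{2g}(\mathbb{F}_\ell):M^tJ_{2g}M=\mu J_{2g},\mu\in\mathbb{F}_\ell^\times\}$, $J_{2g}=\begin{pmatrix}0&I_g\\-I_g&0\end{pmatrix}$; $\mu$ is the multiplicator of $M$. For such $M$ the characteristic polynomial factors over $\overline{\mathbb{F}}_\ell$ as $\prod_{i=1}^g(X-\lambda_i(M))(X-\mu\lambda_i(M)^{-1})$ for some $\lambda_1(M),\dots,\lambda_g(M)\in\overline{\mathbb{F}}_\ell$. $M$ is semisimple if its minimal polynomial has distinct roots in $\overline{\mathbb{F}}_\ell$. Define $\mathcal{C}(\ell,t)=\{M\in\operatorname{GSp}_{2g}(\mathbb{F}_\ell):\lambda_i(M)\in\mathbb{F}_\ell^\times\ (1\le i\le g),\ \operatorname{tr}M=-t\bmod\ell\}$, $\mathcal{C}^{ss}(\ell,t)$ its subset of semisimple matrices, $\mathcal{C}^{ss}(\ell,|t|\le z)=\bigcup_{t\in\mathbb{Z},|t|\le z}\mathcal{C}^{ss}(\ell,t)$, $\mathcal{C}(\ell,|t|\le z)=\bigcup_{|t|\le z}\mathcal{C}(\ell,t)$, $\mathcal{C}_B(\ell,t)=\mathcal{C}(\ell,t)\cap B_{2g}(\mathbb{F}_\ell)$, $\mathcal{C}_B(\ell,|t|\le z)=\mathcal{C}(\ell,|t|\le z)\cap B_{2g}(\mathbb{F}_\ell)$. Groups: $\mathcal{B}_g$ = invertible upper triangular $g\times g$ matrices over $\mathbb{F}_\ell$,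 $\mathcal{U}_g$ = those with diagonal entries $1$, $\mathcal{U}'_g$ = those with all diagonal entries equal to a common $\lambda\in\mathbb{F}_\ell^\times$ ($d(A):=\lambda$); $B_{2g}(\mathbb{F}_\ell)=\{\begin{pmatrix}A&\mu^{-1}AS\\0&\mu(A^t)^{-1}\end{pmatrix}:A\in\mathcal{B}_g,\mu\in\mathbb{F}_\ell^\times,S\text{ symmetric}\}$, $U_{2g}(\mathbb{F}_\ell)=\{\begin{pmatrix}A&AS\\0&(A^t)^{-1}\end{pmatrix}:A\in\mathcal{U}_g,S\text{ symmetric}\}$, $U'_{2g}(\mathbb{F}_\ell)=\{\begin{pmatrix}A&\mu^{-1}AS\\0&\mu(A^t)^{-1}\end{pmatrix}:A\in\mathcal{U}'_g,\mu=d(A)^2,S\text{ symmetric}\}$. *)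

theory Defs
  imports "Jordan_Normal_Form.Char_Poly" "HOL-Algebra.Algebraic_Closure_Type"
begin

definition Jmat :: "nat \<Rightarrow> 'a::field mat" where
  "Jmat g = four_block_mat (0\<^sub>m g g) (1\<^sub>m g) (- 1\<^sub>m g) (0\<^sub>m g g)"

definition GSp :: "nat \<Rightarrow> 'a::field mat set" where
  "GSp g = {M \<in> carrier_mat (2*g) (2*g). invertible_mat M \<and>
      (\<exists>\<mu>. \<mu> \<noteq> 0 \<and> transpose_mat M * Jmat g * M = \<mu> \<cdot>\<^sub>m Jmat g)}"

text \<open>The multiplicator of M (unique for g >= 1).\<close>
definition multiplicator :: "nat \<Rightarrow> 'a::field mat \<Rightarrow> 'a" where
  "multiplicator g M = (THE \<mu>. transpose_mat M * Jmat g * M = \<mu> \<cdot>\<^sub>m Jmat g)"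

definition mat_trace :: "'a::comm_ring_1 mat \<Rightarrow> 'a" where
  "mat_trace M = (\<Sum>i<dim_row M. M $$ (i, i))"

definition poly_mat_eval :: "'a::comm_ring_1 poly \<Rightarrow> 'a mat \<Rightarrow> 'a mat" where
  "poly_mat_eval p M = mat (dim_row M) (dim_row M)
     (\<lambda>(i, j). \<Sum>k\<le>Polynomial.degree p. Polynomial.coeff p k * (M ^\<^sub>m k) $$ (i, j))"

definition is_minimal_poly :: "'a::field mat \<Rightarrow> 'a poly \<Rightarrow> bool" where
  "is_minimal_poly M p \<longleftrightarrow> Polynomial.lead_coeff p = 1 \<and> poly_mat_eval p M = 0\<^sub>m (dim_row M) (dim_row M) \<and>
     (\<forall>q. q \<noteq> 0 \<and> poly_mat_eval q M = 0\<^sub>m (dim_row M) (dim_row M) \<longrightarrow> Polynomial.degree p \<le> Polynomial.degree q)"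

definition semisimple :: "'a::field mat \<Rightarrow> bool" where
  "semisimple M \<longleftrightarrow> (\<exists>p. is_minimal_poly M p \<and> rsquarefree (map_poly to_ac p))"

definition eigen_split :: "nat \<Rightarrow> 'a::field mat \<Rightarrow> bool" where
  "eigen_split g M \<longleftrightarrow> (\<exists>lam :: nat \<Rightarrow> 'a alg_closure.
      map_poly to_ac (char_poly M) =
        (\<Prod>i<g. [:- lam i, 1:] * [:- (to_ac (multiplicator g M) * inverse (lam i)), 1:]) \<and>
      (\<forall>i<g. lam i \<in> to_ac ` (UNIV - {0})))"

definition Cset :: "nat \<Rightarrow> int \<Rightarrow> 'a::field mat set" where
  "Cset g t = {M \<in> GSp g. eigen_split g M \<and> mat_trace M = - of_int t}"

definition Css :: "nat \<Rightarrow> int \<Rightarrow> 'a::field mat set" where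
  "Css g t = {M \<in> Cset g t. semisimple M}"

definition Css_le :: "nat \<Rightarrow> real \<Rightarrow> 'a::field mat set" where
  "Css_le g z = (\<Union>t \<in> {t::int. \<bar>real_of_int t\<bar> \<le> z}. Css g t)"

definition Cset_le :: "nat \<Rightarrow> real \<Rightarrow> 'a::field mat set" where
  "Cset_le g z = (\<Union>t \<in> {t::int. \<bar>real_of_int t\<bar> \<le> z}. Cset g t)"

definition is_inverse_mat :: "nat \<Rightarrow> 'a::field mat \<Rightarrow> 'a mat \<Rightarrow> bool" where
  "is_inverse_mat n A B \<longleftrightarrow> A \<in> carrier_mat n n \<and> B \<in> carrier_mat n n \<and>
      A * B = 1\<^sub>m n \<and> B * A = 1\<^sub>m n"

text \<open>The block matrix [[A, mu^{-1} A S], [0, mu (A^t)^{-1}]], Ai being the inverse of A.\<close>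
definition borel_block :: "nat \<Rightarrow> 'a::field mat \<Rightarrow> 'a mat \<Rightarrow> 'a \<Rightarrow> 'a mat \<Rightarrow> 'a mat" where
  "borel_block g A Ai \<mu> S = four_block_mat A (inverse \<mu> \<cdot>\<^sub>m (A * S)) (0\<^sub>m g g) (\<mu> \<cdot>\<^sub>m transpose_mat Ai)"

definition Borel_g :: "nat \<Rightarrow> 'a::field mat set" where
  "Borel_g g = {A \<in> carrier_mat g g. upper_triangular A \<and> invertible_mat A}"

definition Unip_g :: "nat \<Rightarrow> 'a::field mat set" where
  "Unip_g g = {A \<in> Borel_g g. \<forall>i<g. A $$ (i, i) = 1}"

definition Unip'_g :: "nat \<Rightarrow> 'a::field mat set" where
  "Unip'_g g = {A \<in> Borel_g g. \<exists>c. c \<noteq> 0 \<and> (\<forall>i<g. A $$ (i, i) = c)}"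

text \<open>d(A): the common diagonal entry.\<close>
definition dA :: "'a::field mat \<Rightarrow> 'a" where
  "dA A = A $$ (0, 0)"

definition B2g :: "nat \<Rightarrow> 'a::field mat set" where
  "B2g g = {borel_block g A Ai \<mu> S | A Ai \<mu> S.
     A \<in> Borel_g g \<and> is_inverse_mat g A Ai \<and> \<mu> \<noteq> 0 \<and>
     S \<in> carrier_mat g g \<and> transpose_mat S = S}"

definition U2g :: "nat \<Rightarrow> 'a::field mat set" where
  "U2g g = {borel_block g A Ai 1 S | A Ai S.
     A \<in> Unip_g g \<and> is_inverse_mat g A Ai \<and>
     S \<in> carrier_mat g g \<and> transpose_mat S = S}"

definition U'2g :: "nat \<Rightarrow> 'a::field mat set" where
  "U'2g g = {borel_block g A Ai ((dA A)^2) S | A Ai S.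
     A \<in> Unip'_g g \<and> is_inverse_mat g A Ai \<and>
     S \<in> carrier_mat g g \<and> transpose_mat S = S}"

definition CB :: "nat \<Rightarrow> int \<Rightarrow> 'a::field mat set" where
  "CB g t = Cset g t \<inter> B2g g"

definition CB_le :: "nat \<Rightarrow> real \<Rightarrow> 'a::field mat set" where
  "CB_le g z = Cset_le g z \<inter> B2g g"

definition conj_stable :: "nat \<Rightarrow> 'a::field mat set \<Rightarrow> 'a mat set \<Rightarrow> bool" where
  "conj_stable g Grp Sset \<longleftrightarrow> (\<forall>P \<in> Grp. \<forall>Q. is_inverse_mat (2*g) P Q \<longrightarrow>
      (\<forall>M \<in> Sset. P * M * Q \<in> Sset))"

end

theory Submission
  imports Defs "HOL-Number_Theory.Residues"
begin

definition pr :: "nat \<Rightarrow> nat \<Rightarrow> nat" where "pr g i = (if i < g then i + g else i - g)"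

lemma Jmat_carrier[simp]: "Jmat g \<in> carrier_mat (2*g) (2*g)"
  unfolding Jmat_def carrier_mat_def by (simp add: mult_2)
lemma Jmat_dim[simp]: "dim_row (Jmat g) = 2*g" "dim_col (Jmat g) = 2*g"
  unfolding Jmat_def by (simp_all add: mult_2)
lemma Jmat_index: "i < 2*g \<Longrightarrow> k < 2*g \<Longrightarrow> (Jmat g :: 'a::field mat) $$ (i,k) =
   (if k = pr g i then (if i < g then 1 else -1) else 0)"
  unfolding Jmat_def pr_def by (simp add: mult_2)

lemma J_mult_left:
  assumes W: "W \<in> carrier_mat (2*g) m" and i: "i < 2*g" and j: "j < m"
  shows "(Jmat g * W :: 'a::field mat) $$ (i,j) = (if i < g then W $$ (i+g, j) else - W $$ (i-g, j))"
proof -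
  have "(Jmat g * W) $$ (i,j) = (\<Sum>k\<in>{0..<2*g}. Jmat g $$ (i,k) * W $$ (k,j))"
    using W i j by (simp add: scalar_prod_def)
  also have "\<dots> = (\<Sum>k\<in>{0..<2*g}. if k = pr g i then (if i < g then 1 else -1) * W $$ (k,j) else 0)"
    by (rule sum.cong, simp, subst Jmat_index, insert i, auto)
  also have "\<dots> = (if i < g then 1 else -1) * W $$ (pr g i, j)"
    using i by (subst sum.delta, auto simp: pr_def)
  finally show ?thesis by (simp add: pr_def)
qed

lemma omega_index:
  assumes V: "V \<in> carrier_mat (2*g) n" and W: "W \<in> carrier_mat (2*g) m" and i: "i < n" and j: "j < m"
  shows "(transpose_mat V * Jmat g * W :: 'a::field mat) $$ (i,j) =
     (\<Sum>k<g. V $$ (k,i) * W $$ (k+g, j) - V $$ (k+g, i) * W $$ (k,j))"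
proof -
  have "transpose_mat V * Jmat g * W = transpose_mat V * (Jmat g * W)"
    using V W by (meson Jmat_carrier assoc_mult_mat transpose_carrier_mat)
  hence "(transpose_mat V * Jmat g * W) $$ (i,j) = (\<Sum>k\<in>{0..<2*g}. V $$ (k,i) * (Jmat g * W) $$ (k,j))"
    using V W i j by (simp add: scalar_prod_def)
  also have "\<dots> = (\<Sum>k\<in>{0..<2*g}. V $$ (k,i) * (if k < g then W $$ (k+g, j) else - W $$ (k-g, j)))"
    by (rule sum.cong, simp, subst J_mult_left[OF W], insert j, auto)
  also have "\<dots> = (\<Sum>k\<in>{0..<g}. V $$ (k,i) * W $$ (k+g, j)) + (\<Sum>k\<in>{g..<2*g}. V $$ (k,i) * (- W $$ (k-g, j)))"
  proof -
    have "{0..<2*g} = {0..<g} \<union> {g..<2*g}" by auto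
    thus ?thesis by (simp add: sum.union_disjoint)
  qed
  also have "(\<Sum>k\<in>{g..<2*g}. V $$ (k,i) * (- W $$ (k-g, j))) = (\<Sum>k\<in>{0..<g}. V $$ (k+g,i) * (- W $$ (k, j)))"
    using sum.shift_bounds_nat_ivl[of "\<lambda>k. V $$ (k,i) * (- W $$ (k-g, j))" 0 g g] by (simp add: mult_2)
  finally show ?thesis unfolding sum_subtractf by (simp add: atLeast0LessThan sum_negf)
qed

lemma mult_carrier_sq[simp]: "A \<in> carrier_mat n n \<Longrightarrow> B \<in> carrier_mat n n \<Longrightarrow> A * B \<in> carrier_mat n n"
  by (rule mult_carrier_mat)

lemma smult_smult_mat[simp]: "(a::'a::comm_ring_1) \<cdot>\<^sub>m (b \<cdot>\<^sub>m A) = (a*b) \<cdot>\<^sub>m A"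
  by (rule eq_matI, auto)

lemma smult_one_mat[simp]: "(1::'a::comm_ring_1) \<cdot>\<^sub>m A = A"
  by (rule eq_matI, auto)

lemma Jmat_index': "i < 2*g \<Longrightarrow> k < 2*g \<Longrightarrow> (Jmat g :: 'a::field mat) $$ (k,i) =
   (if k = pr g i then (if i < g then -1 else 1) else 0)"
  by (subst Jmat_index, auto simp: pr_def)

lemma J_mult_right:
  assumes W: "W \<in> carrier_mat m (2*g)" and i: "i < m" and j: "j < 2*g"
  shows "(W * Jmat g :: 'a::field mat) $$ (i,j) = (if j < g then - W $$ (i, j+g) else W $$ (i, j-g))"
proof -
  have "(W * Jmat g) $$ (i,j) = (\<Sum>k\<in>{0..<2*g}. W $$ (i,k) * Jmat g $$ (k,j))"
    using W i j by (simp add: scalar_prod_def)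
  also have "\<dots> = (\<Sum>k\<in>{0..<2*g}. if k = pr g j then W $$ (i,k) * (if j < g then -1 else 1) else 0)"
    by (rule sum.cong, simp, subst Jmat_index', insert j, auto)
  also have "\<dots> = W $$ (i, pr g j) * (if j < g then -1 else 1)"
    using j by (subst sum.delta, auto simp: pr_def)
  finally show ?thesis by (simp add: pr_def)
qed

lemma JJ: "(Jmat g * Jmat g :: 'a::field mat) = - 1\<^sub>m (2*g)"
proof (rule eq_matI)
  fix i j assume ij: "i < dim_row (- 1\<^sub>m (2*g) :: 'a mat)" "j < dim_col (- 1\<^sub>m (2*g) :: 'a mat)"
  have "(Jmat g * Jmat g :: 'a mat) $$ (i,j) = (if i < g then Jmat g $$ (i+g, j) else - Jmat g $$ (i-g, j))"
    by (rule J_mult_left, insert ij, auto)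
  show "(Jmat g * Jmat g :: 'a mat) $$ (i,j) = (- 1\<^sub>m (2*g) :: 'a mat) $$ (i,j)"
  proof (cases "i < g")
    case True
    have "Jmat g $$ (i+g, j) = (if j = pr g (i+g) then (if i+g < g then 1 else -1) else (0::'a))"
      by (rule Jmat_index, insert ij True, auto)
    then show ?thesis using True ij \<open>_ = (if i < g then _ else _)\<close> by (simp add: pr_def)
  next
    case False
    have "Jmat g $$ (i-g, j) = (if j = pr g (i-g) then (if i-g < g then 1 else -1) else (0::'a))"
      by (rule Jmat_index, insert ij False, auto)
    then show ?thesis using False ij \<open>_ = (if i < g then _ else _)\<close> by (auto simp: pr_def)
  qed
next
  show "dim_row (Jmat g * Jmat g :: 'a mat) = dim_row (- 1\<^sub>m (2*g) :: 'a mat)" by simp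
  show "dim_col (Jmat g * Jmat g :: 'a mat) = dim_col (- 1\<^sub>m (2*g) :: 'a mat)" by simp
qed

definition sympl :: "nat \<Rightarrow> 'a::field \<Rightarrow> 'a mat \<Rightarrow> bool" where
  "sympl g \<mu> V \<longleftrightarrow> V \<in> carrier_mat (2*g) (2*g) \<and> transpose_mat V * Jmat g * V = \<mu> \<cdot>\<^sub>m Jmat g"

lemma congr_mult:
  assumes V: "V \<in> carrier_mat n n" and W: "W \<in> carrier_mat n n" and M: "M \<in> carrier_mat n n"
  shows "transpose_mat (V * W) * M * (V * W) = transpose_mat W * (transpose_mat V * M * V) * (W :: 'a::field mat)"
  using V W M by (simp add: transpose_mult[OF V W] assoc_mult_mat[of _ n n _ n _ n])

lemma smult_mid:
  assumes A: "A \<in> carrier_mat n n" and B: "B \<in> carrier_mat n n" and C: "C \<in> carrier_mat n n"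
  shows "A * (c \<cdot>\<^sub>m B) * C = c \<cdot>\<^sub>m (A * B * (C :: 'a::field mat))"
  by (subst mult_smult_distrib[OF A B], subst mult_smult_assoc_mat[of _ n n _ n], insert A B C, auto)

lemma sympl_mult:
  assumes "sympl g \<mu> V" "sympl g \<nu> W"
  shows "sympl g (\<mu> * \<nu>) (V * W)"
proof -
  have V: "V \<in> carrier_mat (2*g) (2*g)" and W: "W \<in> carrier_mat (2*g) (2*g)"
    and eV: "transpose_mat V * Jmat g * V = \<mu> \<cdot>\<^sub>m Jmat g"
    and eW: "transpose_mat W * Jmat g * W = \<nu> \<cdot>\<^sub>m Jmat g" using assms by (auto simp: sympl_def)
  have J: "Jmat g \<in> carrier_mat (2*g) (2*g)" by simp
  have "transpose_mat (V * W) * Jmat g * (V * W) = transpose_mat W * (transpose_mat V * Jmat g * V) * W"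
    using V W J by (simp add: transpose_mult[OF V W] assoc_mult_mat[of _ "2*g" "2*g" _ "2*g" _ "2*g"])
  also have "\<dots> = \<mu> \<cdot>\<^sub>m (transpose_mat W * Jmat g * W)"
    unfolding eV using W J by (simp add: mult_smult_distrib[of _ "2*g" "2*g" _ "2*g"] mult_smult_assoc_mat[of _ "2*g" "2*g" _ "2*g"])
  also have "\<dots> = (\<mu> * \<nu>) \<cdot>\<^sub>m Jmat g" unfolding eW by simp
  finally show ?thesis using V W by (simp add: sympl_def)
qed

definition sinv :: "nat \<Rightarrow> 'a::field \<Rightarrow> 'a mat \<Rightarrow> 'a mat" where
  "sinv g \<mu> V = (- inverse \<mu>) \<cdot>\<^sub>m (Jmat g * transpose_mat V * Jmat g)"

lemma sinv_carrier: "V \<in> carrier_mat (2*g) (2*g) \<Longrightarrow> sinv g \<mu> V \<in> carrier_mat (2*g) (2*g)"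
  unfolding sinv_def by simp

lemma sinv_left:
  assumes "sympl g \<mu> V" "\<mu> \<noteq> 0"
  shows "sinv g \<mu> V * V = 1\<^sub>m (2*g)"
proof -
  have V: "V \<in> carrier_mat (2*g) (2*g)" 
    and eV: "transpose_mat V * Jmat g * V = \<mu> \<cdot>\<^sub>m Jmat g" using assms by (auto simp: sympl_def)
  have J: "Jmat g \<in> carrier_mat (2*g) (2*g)" by simp
  have "sinv g \<mu> V * V = (- inverse \<mu>) \<cdot>\<^sub>m ((Jmat g * transpose_mat V * Jmat g) * V)"
    unfolding sinv_def by (rule mult_smult_assoc_mat[of _ "2*g" "2*g"], insert V, auto)
  also have "(Jmat g * transpose_mat V * Jmat g) * V = Jmat g * (transpose_mat V * Jmat g * V)"
    using V by (simp add: assoc_mult_mat[of _ "2*g" "2*g" _ "2*g" _ "2*g"])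
  also have "Jmat g * (transpose_mat V * Jmat g * V) = \<mu> \<cdot>\<^sub>m (Jmat g * Jmat g)"
    unfolding eV by (subst mult_smult_distrib[of _ "2*g" "2*g" _ "2*g"], insert J, auto)
  also have "(- inverse \<mu>) \<cdot>\<^sub>m (\<mu> \<cdot>\<^sub>m (Jmat g * Jmat g)) = (- 1) \<cdot>\<^sub>m (Jmat g * Jmat g)"
    using assms(2) by simp
  also have "\<dots> = 1\<^sub>m (2*g)" unfolding JJ using assms(2) by (rule_tac eq_matI, auto)
  finally show ?thesis .
qed

lemma sinv_right:
  assumes "sympl g \<mu> V" "\<mu> \<noteq> 0"
  shows "V * sinv g \<mu> V = 1\<^sub>m (2*g)"
  using mat_mult_left_right_inverse[OF sinv_carrier[of V g \<mu>] _ sinv_left[OF assms]] assms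
  by (auto simp: sympl_def)

lemma inverse_unique:
  fixes A :: "'a::field mat"
  assumes "A \<in> carrier_mat n n" "B \<in> carrier_mat n n" "C \<in> carrier_mat n n"
    "B * A = 1\<^sub>m n" "A * C = 1\<^sub>m n"
  shows "C = B"
proof -
  have "C = (B * A) * C" using left_mult_one_mat[OF assms(3)] assms(4) by simp
  also have "\<dots> = B * (A * C)" using assms(1-3) by (simp add: assoc_mult_mat[of _ n n])
  also have "\<dots> = B" using assms right_mult_one_mat[of B n n] by simp
  finally show ?thesis .
qed

lemma sympl_invertible:
  assumes "sympl g \<mu> V" "\<mu> \<noteq> 0"
  shows "invertible_mat V"
  using assms sinv_left[OF assms] sinv_right[OF assms] sinv_carrier[of V g \<mu>]
  unfolding invertible_mat_def inverts_mat_def sympl_def square_mat.simps by (intro conjI exI[of _ "sinv g \<mu> V"]) auto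

lemma GSp_iff: "V \<in> GSp g \<longleftrightarrow> (\<exists>\<mu>. \<mu> \<noteq> 0 \<and> sympl g \<mu> V)"
proof
  assume "V \<in> GSp g" thus "\<exists>\<mu>. \<mu> \<noteq> 0 \<and> sympl g \<mu> V" unfolding GSp_def sympl_def by auto
next
  assume "\<exists>\<mu>. \<mu> \<noteq> 0 \<and> sympl g \<mu> V"
  then obtain \<mu> where m: "\<mu> \<noteq> 0" "sympl g \<mu> V" by auto
  have "invertible_mat V" by (rule sympl_invertible[OF m(2,1)])
  with m show "V \<in> GSp g" unfolding GSp_def sympl_def by auto
qed

lemma sympl_inverse:
  assumes "sympl g \<mu> V" "\<mu> \<noteq> 0" "is_inverse_mat (2*g) V W"
  shows "sympl g (inverse \<mu>) W"
proof -
  have W: "W = sinv g \<mu> V"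
    by (rule inverse_unique[of V "2*g"], insert assms sinv_left[OF assms(1,2)] sinv_carrier[of V g \<mu>],
       auto simp: is_inverse_mat_def sympl_def)
  have V: "V \<in> carrier_mat (2*g) (2*g)" 
    and eV: "transpose_mat V * Jmat g * V = \<mu> \<cdot>\<^sub>m Jmat g" using assms by (auto simp: sympl_def)
  have Wc: "W \<in> carrier_mat (2*g) (2*g)" using assms(3) by (auto simp: is_inverse_mat_def)
  have WV: "W * V = 1\<^sub>m (2*g)" "V * W = 1\<^sub>m (2*g)" using assms(3) by (auto simp: is_inverse_mat_def)
  have J: "Jmat g \<in> carrier_mat (2*g) (2*g)" by simp
  have "transpose_mat W * Jmat g * W = transpose_mat W * (inverse \<mu> \<cdot>\<^sub>m (transpose_mat V * Jmat g * V)) * W"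
    unfolding eV using assms(2) by simp
  also have "\<dots> = inverse \<mu> \<cdot>\<^sub>m (transpose_mat W * (transpose_mat V * Jmat g * V) * W)"
    by (rule smult_mid[of _ "2*g"], insert V Wc J, auto)
  also have "\<dots> = inverse \<mu> \<cdot>\<^sub>m (transpose_mat (V * W) * Jmat g * (V * W))"
    using congr_mult[OF V Wc J] by simp
  also have "\<dots> = inverse \<mu> \<cdot>\<^sub>m Jmat g" unfolding WV by simp
  finally show ?thesis using Wc by (simp add: sympl_def)
qed

lemma multiplicator_eq:
  assumes "g \<ge> 1" "sympl g \<mu> V"
  shows "multiplicator g V = \<mu>"
  unfolding multiplicator_def
proof (rule the_equality)
  show "transpose_mat V * Jmat g * V = \<mu> \<cdot>\<^sub>m Jmat g" using assms by (simp add: sympl_def)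
  fix \<nu> assume "transpose_mat V * Jmat g * V = \<nu> \<cdot>\<^sub>m Jmat g"
  hence "\<nu> \<cdot>\<^sub>m Jmat g = (\<mu> \<cdot>\<^sub>m Jmat g :: 'a mat)" using assms by (simp add: sympl_def)
  hence "(\<nu> \<cdot>\<^sub>m Jmat g :: 'a mat) $$ (0, g) = (\<mu> \<cdot>\<^sub>m Jmat g) $$ (0, g)" by simp
  thus "\<nu> = \<mu>" using assms(1) by (simp add: Jmat_index pr_def)
qed


lemma sum_single:
  assumes "i < n" "\<And>k. k < n \<Longrightarrow> k \<noteq> i \<Longrightarrow> f k = 0"
  shows "(\<Sum>k\<in>{0..<(n::nat)}. f k) = (f i :: 'a::comm_monoid_add)"
proof -
  have "(\<Sum>k\<in>{0..<n}. f k) = f i + (\<Sum>k\<in>{0..<n} - {i}. f k)"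
    using assms(1) by (subst sum.remove[of _ i], auto)
  also have "(\<Sum>k\<in>{0..<n} - {i}. f k) = 0" by (rule sum.neutral, insert assms(2), auto)
  finally show ?thesis by simp
qed

lemma sum_zero:
  assumes "\<And>k. k < n \<Longrightarrow> f k = 0"
  shows "(\<Sum>k\<in>{0..<(n::nat)}. f k) = (0 :: 'a::comm_monoid_add)"
  by (rule sum.neutral, insert assms, auto)

lemma ut_diag_nonzero:
  fixes A :: "'a::field mat"
  assumes A: "A \<in> carrier_mat n n" and ut: "upper_triangular A" and B: "B \<in> carrier_mat n n"
    and AB: "A * B = 1\<^sub>m n" and i: "i < n"
  shows "A $$ (i,i) \<noteq> 0"
proof
  assume 0: "A $$ (i,i) = 0"
  have "det A * det B = 1" using det_mult[OF A B] AB by simp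
  hence "det A \<noteq> 0" by auto
  moreover have "det A = prod_list (diag_mat A)" by (rule det_upper_triangular[OF ut A])
  moreover have "0 \<in> set (diag_mat A)" using 0 i A unfolding diag_mat_def by (auto simp: image_iff intro!: bexI[of _ i])
  ultimately show False by (simp add: prod_list_zero_iff)
qed

lemma ut_inverse:
  fixes A :: "'a::field mat"
  assumes A: "A \<in> carrier_mat n n" and ut: "upper_triangular A" and B: "B \<in> carrier_mat n n"
    and AB: "A * B = 1\<^sub>m n"
  shows "upper_triangular B" "\<And>i. i < n \<Longrightarrow> A $$ (i,i) * B $$ (i,i) = 1"
proof -
  have utA: "\<And>i j. i < n \<Longrightarrow> j < i \<Longrightarrow> A $$ (i,j) = 0" using ut A by auto
  have main: "B $$ (i,j) = 0" if "i < n" "j < i" for i j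
    using that
  proof (induct "n - i" arbitrary: i j rule: less_induct)
    case (less i j)
    note ji = less(3)
    have "(A * B) $$ (i,j) = (\<Sum>k\<in>{0..<n}. A $$ (i,k) * B $$ (k,j))"
      using A B less(2) ji by (simp add: scalar_prod_def)
    also have "\<dots> = A $$ (i,i) * B $$ (i,j)"
    proof (rule sum_single[OF less(2)])
      fix k assume k: "k < n" "k \<noteq> i"
      show "A $$ (i,k) * B $$ (k,j) = 0"
      proof (cases "k < i")
        case True thus ?thesis using utA[OF less(2)] by simp
      next
        case False
        hence "i < k" using k by simp
        hence "B $$ (k,j) = 0" using less(1)[of k j] k ji by simp
        thus ?thesis by simp
      qed
    qed
    finally have "A $$ (i,i) * B $$ (i,j) = 0" using AB less(2) ji by simp
    moreover have "A $$ (i,i) \<noteq> 0" by (rule ut_diag_nonzero[OF A ut B AB less(2)])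
    ultimately show "B $$ (i,j) = 0" by simp
  qed
  show "upper_triangular B" using main B by (auto intro!: upper_triangularI)
  fix i assume i: "i < n"
  have "(A * B) $$ (i,i) = (\<Sum>k\<in>{0..<n}. A $$ (i,k) * B $$ (k,i))"
    using A B i by (simp add: scalar_prod_def)
  also have "\<dots> = A $$ (i,i) * B $$ (i,i)"
  proof (rule sum_single[OF i])
    fix k assume k: "k < n" "k \<noteq> i"
    show "A $$ (i,k) * B $$ (k,i) = 0"
    proof (cases "k < i")
      case True thus ?thesis using utA[OF i] by simp
    next
      case False
      hence "i < k" using k by simp
      thus ?thesis using main[OF k(1)] by simp
    qed
  qed
  finally show "A $$ (i,i) * B $$ (i,i) = 1" using AB i by simp
qed

definition shape :: "nat \<Rightarrow> 'a::field mat \<Rightarrow> bool" where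
  "shape g V \<longleftrightarrow> (\<forall>i<2*g. \<forall>j<2*g. 
     (i < g \<and> j < i \<longrightarrow> V $$ (i,j) = 0) \<and> (g \<le> i \<and> j < g \<longrightarrow> V $$ (i,j) = 0) \<and>
     (g \<le> i \<and> i < j \<longrightarrow> V $$ (i,j) = 0))"

lemma shape_mult_term:
  assumes "shape g V" "shape g W" "i < 2*g" "j < 2*g" "k < 2*g"
    and h: "(i < g \<and> j < i) \<or> (g \<le> i \<and> j < g) \<or> (g \<le> i \<and> i < j) \<or> k \<noteq> i \<and> i = j"
  shows "V $$ (i,k) * W $$ (k,j) = 0"
proof -
  have v: "(i < g \<and> k < i \<longrightarrow> V $$ (i,k) = 0) \<and> (g \<le> i \<and> k < g \<longrightarrow> V $$ (i,k) = 0) \<and>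
     (g \<le> i \<and> i < k \<longrightarrow> V $$ (i,k) = 0)" using assms(1,3,5) unfolding shape_def by blast
  have w: "(k < g \<and> j < k \<longrightarrow> W $$ (k,j) = 0) \<and> (g \<le> k \<and> j < g \<longrightarrow> W $$ (k,j) = 0) \<and>
     (g \<le> k \<and> k < j \<longrightarrow> W $$ (k,j) = 0)" using assms(2,4,5) unfolding shape_def by blast
  have "V $$ (i,k) = 0 \<or> W $$ (k,j) = 0"
  proof (cases "k < g")
    case True
    then show ?thesis using v w h by (cases "k < i"; cases "i < k"; simp; linarith)
  next
    case False
    then show ?thesis using v w h by (cases "k < i"; cases "i < k"; simp; linarith)
  qed
  thus ?thesis by auto
qed

lemma shape_mult:
  assumes V: "V \<in> carrier_mat (2*g) (2*g)" and W: "W \<in> carrier_mat (2*g) (2*g)"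
    and sV: "shape g V" and sW: "shape g W"
  shows "shape g (V * W)" "\<And>i. i < 2*g \<Longrightarrow> (V * W) $$ (i,i) = V $$ (i,i) * W $$ (i,i)"
proof -
  have e: "(V * W) $$ (i,j) = (\<Sum>k\<in>{0..<2*g}. V $$ (i,k) * W $$ (k,j))" if "i < 2*g" "j < 2*g" for i j
    using V W that by (simp add: scalar_prod_def)
  show "shape g (V * W)" unfolding shape_def
  proof (intro allI impI conjI)
    fix i j assume ij: "i < 2*g" "j < 2*g"
    show "(V * W) $$ (i, j) = 0" if "i < g \<and> j < i"
      unfolding e[OF ij] by (rule sum_zero, rule shape_mult_term[OF sV sW ij], insert that, auto)
    show "(V * W) $$ (i, j) = 0" if "g \<le> i \<and> j < g"
      unfolding e[OF ij] by (rule sum_zero, rule shape_mult_term[OF sV sW ij], insert that, auto)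
    show "(V * W) $$ (i, j) = 0" if "g \<le> i \<and> i < j"
      unfolding e[OF ij] by (rule sum_zero, rule shape_mult_term[OF sV sW ij], insert that, auto)
  qed
  fix i assume i: "i < 2*g"
  show "(V * W) $$ (i,i) = V $$ (i,i) * W $$ (i,i)"
    unfolding e[OF i i] by (rule sum_single[OF i], rule shape_mult_term[OF sV sW i i], auto)
qed


definition Pf :: "nat \<Rightarrow> 'a::field mat \<Rightarrow> nat \<Rightarrow> nat \<Rightarrow> 'a" where
  "Pf g V a b = (\<Sum>k<g. V $$ (k,a) * V $$ (k+g,b+g))"
definition Qf :: "nat \<Rightarrow> 'a::field mat \<Rightarrow> nat \<Rightarrow> nat \<Rightarrow> 'a" where
  "Qf g V a b = (\<Sum>k<g. V $$ (k,a+g) * V $$ (k+g,b+g))"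

lemma omega_ll:
  assumes V: "V \<in> carrier_mat (2*g) (2*g)" and ll: "\<And>i j. i < g \<Longrightarrow> j < g \<Longrightarrow> V $$ (i+g,j) = 0"
    and i: "i < 2*g" and j: "j < 2*g"
  shows "(transpose_mat V * Jmat g * V) $$ (i,j) = (if i < g then (if j < g then 0 else Pf g V i (j-g))
     else (if j < g then - Pf g V j (i-g) else Qf g V (i-g) (j-g) - Qf g V (j-g) (i-g)))"
proof -
  have o: "(transpose_mat V * Jmat g * V) $$ (i,j) = (\<Sum>k<g. V $$ (k,i) * V $$ (k+g, j) - V $$ (k+g, i) * V $$ (k,j))"
    by (rule omega_index[OF V V i j])
  show ?thesis
  proof (cases "i < g")
    case True note iT = True
    show ?thesis
    proof (cases "j < g")
      case True
      thus ?thesis unfolding o using iT ll by simp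
    next
      case False
      have "(\<Sum>k<g. V $$ (k,i) * V $$ (k+g, j) - V $$ (k+g, i) * V $$ (k,j)) = Pf g V i (j-g)"
        unfolding Pf_def by (rule sum.cong, insert iT False ll, auto)
      thus ?thesis unfolding o using iT False by simp
    qed
  next
    case False note iF = False
    show ?thesis
    proof (cases "j < g")
      case True
      have "(\<Sum>k<g. V $$ (k,i) * V $$ (k+g, j) - V $$ (k+g, i) * V $$ (k,j)) = (\<Sum>k<g. - (V $$ (k,j) * V $$ (k+g,i-g+g)))"
        by (rule sum.cong, insert iF True ll, auto)
      thus ?thesis unfolding o using iF True by (simp add: Pf_def sum_negf)
    next
      case False
      have "(\<Sum>k<g. V $$ (k,i) * V $$ (k+g, j) - V $$ (k+g, i) * V $$ (k,j)) = 
        (\<Sum>k<g. V $$ (k,i-g+g) * V $$ (k+g, j-g+g) - V $$ (k,j-g+g) * V $$ (k+g, i-g+g))"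
        by (rule sum.cong, insert iF False, auto)
      thus ?thesis unfolding o using iF False by (simp add: Qf_def sum_subtractf)
    qed
  qed
qed

lemma sympl_ll_iff:
  assumes V: "V \<in> carrier_mat (2*g) (2*g)" and ll0: "\<forall>i<g. \<forall>j<g. V $$ (i+g,j) = 0"
  shows "sympl g \<mu> V \<longleftrightarrow> (\<forall>a<g. \<forall>b<g. Pf g V a b = (if a = b then \<mu> else 0) \<and> Qf g V a b = Qf g V b a)"
proof -
  have ll: "\<And>i j. i < g \<Longrightarrow> j < g \<Longrightarrow> V $$ (i+g,j) = 0" using ll0 by auto
  show ?thesis
proof
  assume "sympl g \<mu> V"
  hence e: "transpose_mat V * Jmat g * V = \<mu> \<cdot>\<^sub>m Jmat g" by (simp add: sympl_def)
  show "\<forall>a<g. \<forall>b<g. Pf g V a b = (if a = b then \<mu> else 0) \<and> Qf g V a b = Qf g V b a"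
  proof (intro allI impI conjI)
    fix a b assume ab: "a < g" "b < g"
    have "(transpose_mat V * Jmat g * V) $$ (a,b+g) = (\<mu> \<cdot>\<^sub>m Jmat g) $$ (a,b+g)" unfolding e ..
    thus "Pf g V a b = (if a = b then \<mu> else 0)" 
      using ab by (subst (asm) omega_ll[OF V ll], auto simp: Jmat_index pr_def)
    have "(transpose_mat V * Jmat g * V) $$ (a+g,b+g) = (\<mu> \<cdot>\<^sub>m Jmat g) $$ (a+g,b+g)" unfolding e ..
    thus "Qf g V a b = Qf g V b a" 
      using ab by (subst (asm) omega_ll[OF V ll], auto simp: Jmat_index pr_def)
  qed
next
  assume h: "\<forall>a<g. \<forall>b<g. Pf g V a b = (if a = b then \<mu> else 0) \<and> Qf g V a b = Qf g V b a"
  have "transpose_mat V * Jmat g * V = \<mu> \<cdot>\<^sub>m Jmat g"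
  proof (rule eq_matI)
    fix i j assume ij: "i < dim_row (\<mu> \<cdot>\<^sub>m Jmat g)" "j < dim_col (\<mu> \<cdot>\<^sub>m (Jmat g :: 'a mat))"
    hence ij: "i < 2*g" "j < 2*g" by auto
    show "(transpose_mat V * Jmat g * V) $$ (i,j) = (\<mu> \<cdot>\<^sub>m Jmat g) $$ (i,j)"
      using ij h by (subst omega_ll[OF V ll], auto simp: Jmat_index pr_def)
  qed (insert V, auto)
  thus "sympl g \<mu> V" using V by (simp add: sympl_def)
qed
qed


lemma borel_block_carrier:
  assumes "A \<in> carrier_mat g g" "Ai \<in> carrier_mat g g" "S \<in> carrier_mat g g"
  shows "borel_block g A Ai \<mu> S \<in> carrier_mat (2*g) (2*g)"
  using assms unfolding borel_block_def carrier_mat_def by (simp add: mult_2)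

lemma borel_block_index:
  assumes "A \<in> carrier_mat g g" "Ai \<in> carrier_mat g g" "S \<in> carrier_mat g g" "i < 2*g" "j < 2*g"
  shows "borel_block g A Ai \<mu> S $$ (i,j) = (if i < g then (if j < g then A $$ (i,j) else (inverse \<mu> \<cdot>\<^sub>m (A * S)) $$ (i, j-g))
     else (if j < g then 0 else \<mu> * Ai $$ (j-g, i-g)))"
  using assms unfolding borel_block_def by (simp add: mult_2)

lemma invertible_matI:
  assumes "A \<in> carrier_mat n n" "B \<in> carrier_mat n n" "A * B = 1\<^sub>m n" 
  shows "invertible_mat (A :: 'a::field mat)"
  using assms mat_mult_left_right_inverse[OF assms(1,2,3)] 
  unfolding invertible_mat_def inverts_mat_def by (intro conjI exI[of _ B], auto)

lemma borel_block_props: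
  fixes A :: "'a::field mat"
  assumes A: "A \<in> Borel_g g" and inv: "is_inverse_mat g A Ai" and mu: "\<mu> \<noteq> 0"
    and S: "S \<in> carrier_mat g g" and sym: "transpose_mat S = S"
  shows "sympl g \<mu> (borel_block g A Ai \<mu> S)" "shape g (borel_block g A Ai \<mu> S)"
    "\<And>i. i < g \<Longrightarrow> borel_block g A Ai \<mu> S $$ (i,i) = A $$ (i,i)"
    "\<And>i. i < g \<Longrightarrow> borel_block g A Ai \<mu> S $$ (i+g,i+g) = \<mu> * Ai $$ (i,i)"
    "\<And>i. i < g \<Longrightarrow> A $$ (i,i) * Ai $$ (i,i) = 1"
proof -
  let ?V = "borel_block g A Ai \<mu> S"
  have Ac: "A \<in> carrier_mat g g" and ut: "upper_triangular A" using A by (auto simp: Borel_g_def)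
  have Aic: "Ai \<in> carrier_mat g g" and AAi: "A * Ai = 1\<^sub>m g" and AiA: "Ai * A = 1\<^sub>m g"
    using inv by (auto simp: is_inverse_mat_def)
  note utAi = ut_inverse[OF Ac ut Aic AAi]
  have Vc: "?V \<in> carrier_mat (2*g) (2*g)" by (rule borel_block_carrier[OF Ac Aic S])
  note idx = borel_block_index[OF Ac Aic S]
  have ll0: "\<forall>i<g. \<forall>j<g. ?V $$ (i+g,j) = 0" by (auto simp: idx)
  have AiB: "Ai * (inverse \<mu> \<cdot>\<^sub>m (A * S)) = inverse \<mu> \<cdot>\<^sub>m S"
  proof -
    have "Ai * (inverse \<mu> \<cdot>\<^sub>m (A * S)) = inverse \<mu> \<cdot>\<^sub>m (Ai * (A * S))"
      by (rule mult_smult_distrib, insert Aic Ac S, auto)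
    also have "Ai * (A * S) = (Ai * A) * S" using Aic Ac S by (simp add: assoc_mult_mat[of _ g g _ g _ g])
    also have "\<dots> = S" using AiA S by simp
    finally show ?thesis .
  qed
  show "sympl g \<mu> ?V"
  proof (subst sympl_ll_iff[OF Vc ll0], intro allI impI conjI)
    fix a b assume ab: "a < g" "b < g"
    have "Pf g ?V a b = (\<Sum>k\<in>{0..<g}. \<mu> * (Ai $$ (b,k) * A $$ (k,a)))"
      unfolding Pf_def atLeast0LessThan[symmetric] by (rule sum.cong, insert ab, auto simp: idx)
    also have "\<dots> = \<mu> * (Ai * A) $$ (b,a)" using ab Ac Aic by (simp add: sum_distrib_left scalar_prod_def)
    finally show "Pf g ?V a b = (if a = b then \<mu> else 0)" using ab AiA by simp
    have "Qf g ?V a b = (\<Sum>k\<in>{0..<g}. \<mu> * (Ai $$ (b,k) * (inverse \<mu> \<cdot>\<^sub>m (A * S)) $$ (k,a)))"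
      unfolding Qf_def atLeast0LessThan[symmetric] by (rule sum.cong, insert ab, auto simp: idx)
    also have "\<dots> = \<mu> * (Ai * (inverse \<mu> \<cdot>\<^sub>m (A * S))) $$ (b,a)" using ab Ac Aic S
      by (simp add: sum_distrib_left scalar_prod_def)
    also have "\<dots> = S $$ (b,a)" unfolding AiB using ab S mu by simp
    finally have q: "Qf g ?V a b = S $$ (b,a)" .
    have "Qf g ?V b a = (\<Sum>k\<in>{0..<g}. \<mu> * (Ai $$ (a,k) * (inverse \<mu> \<cdot>\<^sub>m (A * S)) $$ (k,b)))"
      unfolding Qf_def atLeast0LessThan[symmetric] by (rule sum.cong, insert ab, auto simp: idx)
    also have "\<dots> = \<mu> * (Ai * (inverse \<mu> \<cdot>\<^sub>m (A * S))) $$ (a,b)" using ab Ac Aic S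
      by (simp add: sum_distrib_left scalar_prod_def)
    also have "\<dots> = S $$ (a,b)" unfolding AiB using ab S mu by simp
    also have "\<dots> = transpose_mat S $$ (b,a)" using ab S by simp
    also have "\<dots> = S $$ (b,a)" unfolding sym ..
    finally show "Qf g ?V a b = Qf g ?V b a" using q by simp
  qed
  show "shape g ?V" unfolding shape_def
  proof (intro allI impI conjI)
    fix i j assume ij: "i < 2*g" "j < 2*g"
    show "?V $$ (i,j) = 0" if "i < g \<and> j < i" using that ij ut Ac by (subst idx, auto)
    show "?V $$ (i,j) = 0" if "g \<le> i \<and> j < g" using that ij by (subst idx, auto)
    show "?V $$ (i,j) = 0" if "g \<le> i \<and> i < j"
    proof -
      have "Ai $$ (j-g, i-g) = 0" using utAi(1) Aic that ij unfolding upper_triangular_def by auto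
      thus ?thesis using that ij by (subst idx, auto)
    qed
  qed
  fix i assume i: "i < g"
  show "?V $$ (i,i) = A $$ (i,i)" using i by (subst idx, auto)
  show "?V $$ (i+g,i+g) = \<mu> * Ai $$ (i,i)" using i by (subst idx, auto)
  show "A $$ (i,i) * Ai $$ (i,i) = 1" by (rule utAi(2)[OF i])
qed

definition tlb :: "nat \<Rightarrow> 'a mat \<Rightarrow> 'a mat" where "tlb g V = mat g g (\<lambda>(i,j). V $$ (i,j))"
definition trb :: "nat \<Rightarrow> 'a mat \<Rightarrow> 'a mat" where "trb g V = mat g g (\<lambda>(i,j). V $$ (i,j+g))"
definition brb :: "nat \<Rightarrow> 'a mat \<Rightarrow> 'a mat" where "brb g V = mat g g (\<lambda>(i,j). V $$ (i+g,j+g))"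

lemma sympl_shape_B2g:
  fixes V :: "'a::field mat"
  assumes sy: "sympl g \<mu> V" and mu: "\<mu> \<noteq> 0" and sh: "shape g V"
  shows "V \<in> B2g g"
proof -
  have Vc: "V \<in> carrier_mat (2*g) (2*g)" using sy by (simp add: sympl_def)
  have ll0: "\<forall>i<g. \<forall>j<g. V $$ (i+g,j) = 0" using sh unfolding shape_def by auto
  have ll: "\<And>i j. i < g \<Longrightarrow> j < g \<Longrightarrow> V $$ (i+g,j) = 0" using ll0 by auto
  note h = sympl_ll_iff[OF Vc ll0, THEN iffD1, OF sy]
  define A where "A = tlb g V"
  define B where "B = trb g V"
  define D where "D = brb g V"
  define Ai where "Ai = inverse \<mu> \<cdot>\<^sub>m transpose_mat D"
  define S where "S = transpose_mat D * B"
  have Ac: "A \<in> carrier_mat g g" and Bc: "B \<in> carrier_mat g g" and Dc: "D \<in> carrier_mat g g"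
    and Aic: "Ai \<in> carrier_mat g g" and Sc: "S \<in> carrier_mat g g"
    unfolding A_def B_def D_def Ai_def S_def tlb_def trb_def brb_def by auto
  have AiA: "Ai * A = 1\<^sub>m g"
  proof (rule eq_matI)
    fix b a assume ba: "b < dim_row (1\<^sub>m g :: 'a mat)" "a < dim_col (1\<^sub>m g :: 'a mat)"
    hence ba: "b < g" "a < g" by auto
    have "(Ai * A) $$ (b,a) = inverse \<mu> * Pf g V a b"
      using ba unfolding Pf_def Ai_def A_def D_def tlb_def brb_def
      by (simp add: scalar_prod_def sum_distrib_left atLeast0LessThan ac_simps)
    thus "(Ai * A) $$ (b,a) = 1\<^sub>m g $$ (b,a)" using h ba mu by auto
  qed (insert Aic Ac, auto)
  have AAi: "A * Ai = 1\<^sub>m g" by (rule mat_mult_left_right_inverse[OF Aic Ac AiA])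
  have Sij: "S $$ (a,b) = Qf g V b a" if "a < g" "b < g" for a b
    using that unfolding S_def Qf_def D_def B_def trb_def brb_def
    by (simp add: scalar_prod_def atLeast0LessThan ac_simps)
  have symS: "transpose_mat S = S"
    by (rule eq_matI, insert Sc h, auto simp: Sij)
  have utA: "upper_triangular A" using sh unfolding A_def tlb_def shape_def by (auto intro!: upper_triangularI)
  have BorA: "A \<in> Borel_g g" unfolding Borel_g_def using Ac utA invertible_matI[OF Ac Aic AAi] by auto
  have inv: "is_inverse_mat g A Ai" unfolding is_inverse_mat_def using Ac Aic AAi AiA by auto
  have AD: "A * transpose_mat D = \<mu> \<cdot>\<^sub>m 1\<^sub>m g"
  proof -
    have "A * transpose_mat D = A * (\<mu> \<cdot>\<^sub>m Ai)" unfolding Ai_def using mu by simp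
    also have "\<dots> = \<mu> \<cdot>\<^sub>m (A * Ai)" by (rule mult_smult_distrib, insert Ac Aic, auto)
    finally show ?thesis unfolding AAi .
  qed
  have AS: "inverse \<mu> \<cdot>\<^sub>m (A * S) = B"
  proof -
    have "A * S = (A * transpose_mat D) * B" unfolding S_def using Ac Dc Bc
      by (simp add: assoc_mult_mat[of _ g g _ g _ g])
    also have "\<dots> = \<mu> \<cdot>\<^sub>m B" unfolding AD using Bc by (simp add: mult_smult_assoc_mat[of _ g g _ g])
    finally show ?thesis using mu by simp
  qed
  have "V = borel_block g A Ai \<mu> S"
  proof (rule eq_matI)
    fix i j assume ij: "i < dim_row (borel_block g A Ai \<mu> S)" "j < dim_col (borel_block g A Ai \<mu> S)"
    hence ij: "i < 2*g" "j < 2*g" using borel_block_carrier[OF Ac Aic Sc, where \<mu>=\<mu>] by auto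
    show "V $$ (i,j) = borel_block g A Ai \<mu> S $$ (i,j)"
      unfolding borel_block_index[OF Ac Aic Sc ij] AS using ij ll[of "i-g" j] mu
      by (auto simp: A_def B_def Ai_def D_def tlb_def trb_def brb_def)
  qed (insert Vc borel_block_carrier[OF Ac Aic Sc, where \<mu>=\<mu>], auto)
  thus ?thesis unfolding B2g_def using BorA inv mu Sc symS by blast
qed

lemma B2g_iff: "V \<in> B2g g \<longleftrightarrow> (\<exists>\<mu>. \<mu> \<noteq> 0 \<and> sympl g \<mu> V \<and> shape g (V :: 'a::field mat))"
proof
  assume "V \<in> B2g g"
  then obtain A Ai \<mu> S where V: "V = borel_block g A Ai \<mu> S" and h: "A \<in> Borel_g g" "is_inverse_mat g A Ai" "\<mu> \<noteq> 0"
     "S \<in> carrier_mat g g" "transpose_mat S = S" unfolding B2g_def by blast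
  show "\<exists>\<mu>. \<mu> \<noteq> 0 \<and> sympl g \<mu> V \<and> shape g V" using borel_block_props[OF h] h(3) V by blast
next
  assume "\<exists>\<mu>. \<mu> \<noteq> 0 \<and> sympl g \<mu> V \<and> shape g V"
  thus "V \<in> B2g g" using sympl_shape_B2g by blast
qed


lemma sinv_index:
  assumes P: "P \<in> carrier_mat (2*g) (2*g)" and i: "i < 2*g" and j: "j < 2*g"
  shows "(Jmat g * transpose_mat P * Jmat g :: 'a::field mat) $$ (i,j) =
    (if i < g then (if j < g then - P $$ (j+g,i+g) else P $$ (j-g,i+g))
     else (if j < g then P $$ (j+g,i-g) else - P $$ (j-g,i-g)))"
proof -
  have PT: "transpose_mat P * Jmat g \<in> carrier_mat (2*g) (2*g)" using P by simp
  have "Jmat g * transpose_mat P * Jmat g = Jmat g * (transpose_mat P * Jmat g)"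
    using P by (simp add: assoc_mult_mat[of _ "2*g" "2*g" _ "2*g" _ "2*g"])
  hence "(Jmat g * transpose_mat P * Jmat g :: 'a::field mat) $$ (i,j) =
     (if i < g then (transpose_mat P * Jmat g) $$ (i+g, j) else - (transpose_mat P * Jmat g) $$ (i-g, j))"
    using J_mult_left[OF PT i j] by simp
  also have "\<dots> = (if i < g then (if j < g then - P $$ (j+g,i+g) else P $$ (j-g,i+g))
     else (if j < g then P $$ (j+g,i-g) else - P $$ (j-g,i-g)))"
  proof -
    have r: "(transpose_mat P * Jmat g) $$ (a,j) = (if j < g then - P $$ (j+g,a) else P $$ (j-g,a))" if "a < 2*g" for a
      by (subst J_mult_right[of _ "2*g"], insert that j P, auto)
    show ?thesis using i j by (simp del: index_mult_mat add: r)
  qed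
  finally show ?thesis .
qed

lemma shape_sinv:
  assumes P: "P \<in> carrier_mat (2*g) (2*g)" and sh: "shape g P"
  shows "shape g (sinv g \<mu> (P :: 'a::field mat))"
  unfolding shape_def
proof (intro allI impI conjI)
  fix i j assume ij: "i < 2*g" "j < 2*g"
  have e: "sinv g \<mu> P $$ (i,j) = - inverse \<mu> * (Jmat g * transpose_mat P * Jmat g) $$ (i,j)"
    unfolding sinv_def using P ij by simp
  note si = sinv_index[OF P ij]
  show "sinv g \<mu> P $$ (i, j) = 0" if "i < g \<and> j < i"
    unfolding e si using that ij sh unfolding shape_def by auto
  show "sinv g \<mu> P $$ (i, j) = 0" if "g \<le> i \<and> j < g"
    unfolding e si using that ij sh unfolding shape_def by auto
  show "sinv g \<mu> P $$ (i, j) = 0" if "g \<le> i \<and> i < j"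
  proof -
    have a: "j - g < 2*g" "i - g < 2*g" "j-g < g" "i-g < j-g" using that ij by auto
    have "P $$ (j-g, i-g) = 0" using sh[unfolded shape_def, rule_format, OF a(1,2)] a(3,4) by blast
    thus ?thesis unfolding e si using that ij by auto
  qed
qed

lemma GSp_carrier: "V \<in> GSp g \<Longrightarrow> V \<in> carrier_mat (2*g) (2*g)"
  unfolding GSp_def by auto

lemma sympl_conj:
  assumes P: "sympl g \<nu> P" "\<nu> \<noteq> 0" and inv: "is_inverse_mat (2*g) P Q" and M: "sympl g \<mu> M"
  shows "sympl g \<mu> (P * M * Q)"
proof -
  have Q: "sympl g (inverse \<nu>) Q" by (rule sympl_inverse[OF P inv])
  have "sympl g (\<nu> * \<mu> * inverse \<nu>) (P * M * Q)" by (rule sympl_mult[OF sympl_mult[OF P(1) M] Q])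
  thus ?thesis using P(2) by (simp add: field_simps)
qed

lemma B2g_mult: "V \<in> B2g g \<Longrightarrow> W \<in> B2g g \<Longrightarrow> V * W \<in> (B2g g :: 'a::field mat set)"
  unfolding B2g_iff
proof -
  assume "\<exists>\<mu>. \<mu> \<noteq> 0 \<and> sympl g \<mu> V \<and> shape g V" "\<exists>\<mu>. \<mu> \<noteq> 0 \<and> sympl g \<mu> W \<and> shape g W"
  then obtain \<mu> \<nu> where h: "\<mu> \<noteq> 0" "sympl g \<mu> V" "shape g V" "\<nu> \<noteq> 0" "sympl g \<nu> W" "shape g W" by blast
  have "sympl g (\<mu> * \<nu>) (V * W)" by (rule sympl_mult[OF h(2) h(5)])
  moreover have "shape g (V * W)" by (rule shape_mult(1), insert h, auto simp: sympl_def)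
  ultimately show "\<exists>\<mu>. \<mu> \<noteq> 0 \<and> sympl g \<mu> (V * W) \<and> shape g (V * W)" using h by (intro exI[of _ "\<mu> * \<nu>"], auto)
qed

lemma B2g_inverse:
  assumes P: "P \<in> B2g g" and inv: "is_inverse_mat (2*g) P Q"
  shows "Q \<in> (B2g g :: 'a::field mat set)"
proof -
  obtain \<mu> where h: "\<mu> \<noteq> 0" "sympl g \<mu> P" "shape g P" using P unfolding B2g_iff by blast
  have Pc: "P \<in> carrier_mat (2*g) (2*g)" using h by (simp add: sympl_def)
  have Q: "Q = sinv g \<mu> P"
    by (rule inverse_unique[of P "2*g"], insert inv sinv_left[OF h(2,1)] sinv_carrier[OF Pc, of \<mu>] Pc,
       auto simp: is_inverse_mat_def)
  have "sympl g (inverse \<mu>) Q" by (rule sympl_inverse[OF h(2,1) inv])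
  moreover have "shape g Q" unfolding Q by (rule shape_sinv[OF Pc h(3)])
  ultimately show ?thesis unfolding B2g_iff using h(1) by (intro exI[of _ "inverse \<mu>"], auto)
qed

lemma B2g_GSp: "V \<in> B2g g \<Longrightarrow> V \<in> GSp g"
  unfolding B2g_iff GSp_iff by blast

lemma mat_trace_comm:
  assumes A: "A \<in> carrier_mat n m" and B: "B \<in> carrier_mat m n"
  shows "mat_trace (A * B) = mat_trace (B * (A :: 'a::comm_ring_1 mat))"
proof -
  have "mat_trace (A * B) = (\<Sum>i<n. \<Sum>k\<in>{0..<m}. A $$ (i,k) * B $$ (k,i))"
    unfolding mat_trace_def using A B by (simp add: scalar_prod_def)
  also have "\<dots> = (\<Sum>k\<in>{0..<m}. \<Sum>i<n. B $$ (k,i) * A $$ (i,k))"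
    by (subst sum.swap, simp add: ac_simps)
  also have "\<dots> = mat_trace (B * A)"
    unfolding mat_trace_def using A B by (simp add: scalar_prod_def atLeast0LessThan)
  finally show ?thesis .
qed

lemma mat_trace_conj:
  assumes "P \<in> carrier_mat n n" "M \<in> carrier_mat n n" "Q \<in> carrier_mat n n" "Q * P = 1\<^sub>m n"
  shows "mat_trace (P * M * Q) = mat_trace (M :: 'a::comm_ring_1 mat)"
proof -
  have "mat_trace (P * M * Q) = mat_trace (Q * (P * M))" by (rule mat_trace_comm[of _ n n], insert assms, auto)
  also have "Q * (P * M) = (Q * P) * M" using assms(1-3) by (simp add: assoc_mult_mat[of _ n n _ n _ n])
  also have "\<dots> = M" using assms(2,4) by (simp add: carrier_matD)
  finally show ?thesis .
qed

lemma pow_conj: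
  assumes P: "P \<in> carrier_mat n n" and M: "M \<in> carrier_mat n n" and Q: "Q \<in> carrier_mat n n"
    and QP: "Q * P = 1\<^sub>m n" and PQ: "P * Q = 1\<^sub>m n"
  shows "(P * M * Q) ^\<^sub>m k = P * (M ^\<^sub>m k) * (Q :: 'a::comm_ring_1 mat)"
proof (induct k)
  case 0
  then show ?case using P M Q PQ by simp
next
  case (Suc k)
  have Mk: "M ^\<^sub>m k \<in> carrier_mat n n" using M by simp
  have "(P * M * Q) ^\<^sub>m Suc k = P * (M ^\<^sub>m k) * Q * (P * M * Q)" using Suc by simp
  also have "\<dots> = P * (M ^\<^sub>m k) * (Q * P) * M * Q"
    using P M Q Mk by (simp add: assoc_mult_mat[of _ n n _ n _ n])
  also have "\<dots> = P * (M ^\<^sub>m k * M) * Q" using P M Q Mk QP by (simp add: assoc_mult_mat[of _ n n _ n _ n])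
  finally show ?case by simp
qed

lemma conj_entry:
  assumes P: "P \<in> carrier_mat n n" and E: "E \<in> carrier_mat n n" and Q: "Q \<in> carrier_mat n n"
    and i: "i < n" and j: "j < n"
  shows "(P * E * Q) $$ (i,j) = (\<Sum>b\<in>{0..<n}. \<Sum>a\<in>{0..<n}. P $$ (i,a) * E $$ (a,b) * Q $$ (b,j))"
  using P E Q i j by (simp add: scalar_prod_def sum_distrib_left mult.assoc) (rule sum.swap)

lemma poly_mat_eval_conj:
  assumes P: "P \<in> carrier_mat n n" and M: "M \<in> carrier_mat n n" and Q: "Q \<in> carrier_mat n n"
    and QP: "Q * P = 1\<^sub>m n" and PQ: "P * Q = 1\<^sub>m n"
  shows "poly_mat_eval p (P * M * Q) = P * poly_mat_eval p M * (Q :: 'a::comm_ring_1 mat)"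
proof (rule eq_matI)
  have PMQ: "P * M * Q \<in> carrier_mat n n" using P M Q by simp
  have Ec: "poly_mat_eval p M \<in> carrier_mat n n" using M unfolding poly_mat_eval_def by auto
  show "dim_row (poly_mat_eval p (P * M * Q)) = dim_row (P * poly_mat_eval p M * Q)"
    using PMQ P Q Ec unfolding poly_mat_eval_def by auto
  show "dim_col (poly_mat_eval p (P * M * Q)) = dim_col (P * poly_mat_eval p M * Q)"
    using PMQ P Q Ec unfolding poly_mat_eval_def by auto
  fix i j assume "i < dim_row (P * poly_mat_eval p M * Q)" "j < dim_col (P * poly_mat_eval p M * Q)"
  hence ij: "i < n" "j < n" using P Q by auto
  have Mk: "\<And>k. M ^\<^sub>m k \<in> carrier_mat n n" using M by simp
  have "poly_mat_eval p (P * M * Q) $$ (i,j) = (\<Sum>k\<le>Polynomial.degree p. Polynomial.coeff p k * ((P * M * Q) ^\<^sub>m k) $$ (i,j))"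
    unfolding poly_mat_eval_def using ij PMQ carrier_matD[OF P] by simp
  also have "\<dots> = (\<Sum>k\<le>Polynomial.degree p. Polynomial.coeff p k * (\<Sum>b\<in>{0..<n}. \<Sum>a\<in>{0..<n}. P $$ (i,a) * (M ^\<^sub>m k) $$ (a,b) * Q $$ (b,j)))"
    by (rule sum.cong, simp, subst pow_conj[OF P M Q QP PQ], subst conj_entry[OF P Mk Q ij], simp)
  also have "\<dots> = (\<Sum>b\<in>{0..<n}. \<Sum>a\<in>{0..<n}. P $$ (i,a) * (\<Sum>k\<le>Polynomial.degree p. Polynomial.coeff p k * (M ^\<^sub>m k) $$ (a,b)) * Q $$ (b,j))"
    by (simp add: sum_distrib_left sum_distrib_right sum.swap[of _ "{..Polynomial.degree p}"] ac_simps)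
  also have "\<dots> = (P * poly_mat_eval p M * Q) $$ (i,j)"
    by (subst conj_entry[OF P Ec Q ij], rule sum.cong, simp, rule sum.cong, simp, insert M, auto simp: poly_mat_eval_def)
  finally show "poly_mat_eval p (P * M * Q) $$ (i,j) = (P * poly_mat_eval p M * Q) $$ (i,j)" .
qed


interpretation to_ac_hom: field_hom "to_ac :: 'a::field \<Rightarrow> 'a alg_closure"
  by (unfold_locales, auto)

interpretation to_ac_poly: map_poly_idom_hom "to_ac :: 'a::field \<Rightarrow> 'a alg_closure" ..

lemma cp_four_block_ll0:
  assumes A: "A \<in> carrier_mat n n" and B: "B \<in> carrier_mat n m" and D: "D \<in> carrier_mat m m"
  shows "char_poly (four_block_mat A B (0\<^sub>m m n) D) = char_poly A * char_poly (D :: 'a::field mat)"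
proof -
  have "char_poly_matrix (four_block_mat A B (0\<^sub>m m n) D) =
    four_block_mat (char_poly_matrix A) (map_mat (\<lambda>a. [:- a:]) B) (0\<^sub>m m n) (char_poly_matrix D)"
    by (rule eq_matI, insert A B D, auto simp: char_poly_matrix_def)
  hence "char_poly (four_block_mat A B (0\<^sub>m m n) D) = det (four_block_mat (char_poly_matrix A) (map_mat (\<lambda>a. [:- a:]) B) (0\<^sub>m m n) (char_poly_matrix D))"
    unfolding char_poly_def by simp
  also have "\<dots> = det (char_poly_matrix A) * det (char_poly_matrix D)"
    by (rule det_four_block_mat_lower_left_zero, insert A B D, auto)
  finally show ?thesis unfolding char_poly_def .
qed

lemma char_poly_ut_prod:
  assumes A: "A \<in> carrier_mat n n" and ut: "upper_triangular A"
  shows "char_poly A = (\<Prod>i<n. [:- A $$ (i,i), 1:])"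
proof -
  have "char_poly A = (\<Prod> a \<leftarrow> diag_mat A. [:- a, 1:])" by (rule char_poly_upper_triangular[OF A ut])
  also have "\<dots> = prod_list (map (\<lambda>i. [:- A $$ (i,i), 1:]) [0..<n])"
    using A unfolding diag_mat_def by (simp add: o_def)
  also have "\<dots> = (\<Prod>i\<in>{0..<n}. [:- A $$ (i,i), 1:])"
    by (subst prod.distinct_set_conv_list[symmetric], auto)
  finally show ?thesis by (simp add: atLeast0LessThan)
qed

lemma char_poly_borel:
  fixes A :: "'a::field mat"
  assumes A: "A \<in> Borel_g g" and inv: "is_inverse_mat g A Ai" and S: "S \<in> carrier_mat g g"
  shows "char_poly (borel_block g A Ai \<mu> S) = (\<Prod>i<g. [:- A $$ (i,i), 1:] * [:- (\<mu> * Ai $$ (i,i)), 1:])"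
proof -
  have Ac: "A \<in> carrier_mat g g" and ut: "upper_triangular A" using A by (auto simp: Borel_g_def)
  have Aic: "Ai \<in> carrier_mat g g" and AAi: "A * Ai = 1\<^sub>m g"
    using inv by (auto simp: is_inverse_mat_def)
  have utAi: "upper_triangular Ai" by (rule ut_inverse(1)[OF Ac ut Aic AAi])
  have "char_poly (borel_block g A Ai \<mu> S) = char_poly A * char_poly (\<mu> \<cdot>\<^sub>m transpose_mat Ai)"
    unfolding borel_block_def by (rule cp_four_block_ll0, insert Ac Aic S, auto)
  also have "\<mu> \<cdot>\<^sub>m transpose_mat Ai = transpose_mat (\<mu> \<cdot>\<^sub>m Ai)" by (rule eq_matI, auto)
  also have "char_poly (transpose_mat (\<mu> \<cdot>\<^sub>m Ai)) = char_poly (\<mu> \<cdot>\<^sub>m Ai)"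
    by (rule char_poly_transpose_mat, insert Aic, auto)
  also have "char_poly (\<mu> \<cdot>\<^sub>m Ai) = (\<Prod>i<g. [:- (\<mu> \<cdot>\<^sub>m Ai) $$ (i,i), 1:])"
    by (rule char_poly_ut_prod, insert Aic utAi, auto simp: upper_triangular_def)
  also have "char_poly A = (\<Prod>i<g. [:- A $$ (i,i), 1:])" by (rule char_poly_ut_prod[OF Ac ut])
  finally have "char_poly (borel_block g A Ai \<mu> S) = (\<Prod>i<g. [:- A $$ (i,i), 1:]) * (\<Prod>i<g. [:- (\<mu> \<cdot>\<^sub>m Ai) $$ (i,i), 1:])" .
  also have "\<dots> = (\<Prod>i<g. [:- A $$ (i,i), 1:] * [:- (\<mu> * Ai $$ (i,i)), 1:])"
    by (subst prod.distrib, rule arg_cong[of _ _ "\<lambda>x. _ * x"], rule prod.cong, insert Aic, auto)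
  finally show ?thesis .
qed

lemma eigen_split_intro:
  fixes V :: "'a::field mat"
  assumes g: "g \<ge> 1" and sy: "sympl g \<mu> V" and d: "\<And>i. i < g \<Longrightarrow> d i \<noteq> 0"
    and cp: "char_poly V = (\<Prod>i<g. [:- d i, 1:] * [:- (\<mu> * inverse (d i)), 1:])"
  shows "eigen_split g V"
  unfolding eigen_split_def
proof (intro exI[of _ "\<lambda>i. to_ac (d i)"] conjI allI impI)
  have m: "multiplicator g V = \<mu>" by (rule multiplicator_eq[OF g sy])
  show "map_poly to_ac (char_poly V) =
    (\<Prod>i<g. [:- to_ac (d i), 1:] * [:- (to_ac (multiplicator g V) * inverse (to_ac (d i))), 1:])"
    unfolding cp m by (simp add: to_ac_poly.hom_prod to_ac_poly.hom_mult)
  fix i assume "i < g"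
  thus "to_ac (d i) \<in> to_ac ` (UNIV - {0})" using d by auto
qed

lemma B2g_eigen_split:
  assumes g: "g \<ge> 1" and V: "V \<in> (B2g g :: 'a::field mat set)"
  shows "eigen_split g V"
proof -
  obtain A Ai \<mu> S where Vd: "V = borel_block g A Ai \<mu> S" and h: "A \<in> Borel_g g" "is_inverse_mat g A Ai" "\<mu> \<noteq> 0"
     "S \<in> carrier_mat g g" "transpose_mat S = S" using V unfolding B2g_def by blast
  note p = borel_block_props[OF h]
  have inv: "Ai $$ (i,i) = inverse (A $$ (i,i))" if "i < g" for i
    using Fields.inverse_unique[OF p(5)[OF that]] by simp
  show ?thesis unfolding Vd
  proof (rule eigen_split_intro[OF g p(1)])
    fix i assume "i < g" thus "A $$ (i,i) \<noteq> 0" using p(5)[of i] by auto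
  next
    show "char_poly (borel_block g A Ai \<mu> S) = (\<Prod>i<g. [:- A $$ (i,i), 1:] * [:- (\<mu> * inverse (A $$ (i,i))), 1:])"
      unfolding char_poly_borel[OF h(1,2,4)] by (rule prod.cong, simp, simp add: inv)
  qed
qed

lemma Cset_conj:
  assumes g: "g \<ge> 1" and P: "P \<in> GSp g" and inv: "is_inverse_mat (2*g) P Q" and M: "M \<in> Cset g t"
  shows "P * M * Q \<in> (Cset g t :: 'a::field mat set)"
proof -
  obtain \<nu> where nu: "\<nu> \<noteq> 0" "sympl g \<nu> P" using P unfolding GSp_iff by blast
  have MG: "M \<in> GSp g" and es: "eigen_split g M" and tr: "mat_trace M = - of_int t" using M unfolding Cset_def by auto
  obtain \<mu> where mu: "\<mu> \<noteq> 0" "sympl g \<mu> M" using MG unfolding GSp_iff by blast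
  have sy: "sympl g \<mu> (P * M * Q)" by (rule sympl_conj[OF nu(2,1) inv mu(2)])
  have Pc: "P \<in> carrier_mat (2*g) (2*g)" and Qc: "Q \<in> carrier_mat (2*g) (2*g)" and Mc: "M \<in> carrier_mat (2*g) (2*g)"
    and PQ: "P * Q = 1\<^sub>m (2*g)" and QP: "Q * P = 1\<^sub>m (2*g)"
    using inv mu unfolding is_inverse_mat_def sympl_def by auto
  have "char_poly (P * M * Q) = char_poly M"
    by (rule char_poly_similar, rule similar_matI[where n="2*g" and P=P and Q=Q], insert Pc Qc Mc PQ QP, auto)
  moreover have "multiplicator g (P * M * Q) = multiplicator g M"
    using multiplicator_eq[OF g sy] multiplicator_eq[OF g mu(2)] by simp
  ultimately have "eigen_split g (P * M * Q)" using es unfolding eigen_split_def by simp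
  moreover have "mat_trace (P * M * Q) = - of_int t" using mat_trace_conj[OF Pc Mc Qc QP] tr by simp
  moreover have "P * M * Q \<in> GSp g" unfolding GSp_iff using sy mu by blast
  ultimately show ?thesis unfolding Cset_def by simp
qed

lemma eval_zero_conj:
  assumes P: "P \<in> carrier_mat n n" and M: "M \<in> carrier_mat n n" and Q: "Q \<in> carrier_mat n n"
    and QP: "Q * P = 1\<^sub>m n" and PQ: "P * Q = 1\<^sub>m n"
  shows "poly_mat_eval q (P * M * Q) = 0\<^sub>m n n \<longleftrightarrow> poly_mat_eval q M = 0\<^sub>m n n"
proof
  have Ec: "poly_mat_eval q M \<in> carrier_mat n n" using M unfolding poly_mat_eval_def by auto
  assume "poly_mat_eval q (P * M * Q) = 0\<^sub>m n n"
  hence z: "P * poly_mat_eval q M * Q = 0\<^sub>m n n" unfolding poly_mat_eval_conj[OF P M Q QP PQ] .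
  have "Q * (P * M * Q) * P = M"
  proof -
    have "Q * (P * M * Q) * P = (Q * P) * M * (Q * P)"
      using P M Q by (simp add: assoc_mult_mat[of _ n n _ n _ n])
    thus ?thesis using QP M by simp
  qed
  hence "poly_mat_eval q M = Q * poly_mat_eval q (P * M * Q) * P"
    using poly_mat_eval_conj[of Q n "P * M * Q" P q] P M Q QP PQ by simp
  also have "\<dots> = Q * (P * poly_mat_eval q M * Q) * P" unfolding poly_mat_eval_conj[OF P M Q QP PQ] ..
  also have "\<dots> = 0\<^sub>m n n" unfolding z using P Q by simp
  finally show "poly_mat_eval q M = 0\<^sub>m n n" .
next
  assume "poly_mat_eval q M = 0\<^sub>m n n"
  thus "poly_mat_eval q (P * M * Q) = 0\<^sub>m n n" unfolding poly_mat_eval_conj[OF P M Q QP PQ] using P Q by simp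
qed

lemma semisimple_conj:
  assumes P: "P \<in> carrier_mat n n" and M: "M \<in> carrier_mat n n" and Q: "Q \<in> carrier_mat n n"
    and QP: "Q * P = 1\<^sub>m n" and PQ: "P * Q = 1\<^sub>m n" and ss: "semisimple M"
  shows "semisimple (P * M * (Q :: 'a::field mat))"
proof -
  obtain p where mp: "is_minimal_poly M p" and rs: "rsquarefree (map_poly to_ac p)" using ss unfolding semisimple_def by blast
  have d: "dim_row (P * M * Q) = n" "dim_row M = n" using P M by auto
  have "is_minimal_poly (P * M * Q) p"
    using mp unfolding is_minimal_poly_def d eval_zero_conj[OF P M Q QP PQ] .
  thus ?thesis using rs unfolding semisimple_def by blast
qed


lemma mat_diag_dims[simp]: "dim_row (mat_diag n h) = n" "dim_col (mat_diag n h) = n"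
  by (simp_all add: mat_diag_def)

lemma mat_diag_pow: "mat_diag n f ^\<^sub>m k = mat_diag n (\<lambda>i. f i ^ k)"
  by (induct k, simp, simp add: power_Suc2 del: power_Suc)

lemma poly_mat_eval_diag: "poly_mat_eval q (mat_diag n f) = mat_diag n (\<lambda>i. poly q (f i))"
proof (rule eq_matI)
  fix i j assume ij: "i < dim_row (mat_diag n (\<lambda>i. poly q (f i)))" "j < dim_col (mat_diag n (\<lambda>i. poly q (f i)))"
  hence ij: "i < n" "j < n" by auto
  have d: "dim_row (mat_diag n f) = n" by simp
  show "poly_mat_eval q (mat_diag n f) $$ (i,j) = mat_diag n (\<lambda>i. poly q (f i)) $$ (i,j)"
    unfolding poly_mat_eval_def d mat_diag_pow using ij by (simp add: mat_diag_def poly_altdef)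
qed (auto simp: poly_mat_eval_def)

lemma order_linear': "Polynomial.order x [:- c, 1:] = (if x = c then 1 else (0::nat))"
  for c :: "'a::idom"
proof (cases "x = c")
  case True thus ?thesis using order_power_n_n[of c 1] by simp
next
  case False 
  have "poly [:- c, 1:] x \<noteq> 0" using False by simp
  hence "Polynomial.order x [:- c, 1:] = 0" by (rule order_0I)
  thus ?thesis using False by simp
qed

lemma rsquarefree_two:
  fixes c d :: "'a::idom"
  assumes "c \<noteq> d" shows "rsquarefree ([:- c, 1:] * [:- d, 1:])"
  unfolding rsquarefree_def
proof (intro conjI allI)
  show "[:- c, 1:] * [:- d, 1:] \<noteq> 0" by simp
  fix x
  have "Polynomial.order x ([:- c, 1:] * [:- d, 1:]) = Polynomial.order x [:- c, 1:] + Polynomial.order x [:- d, 1:]"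
    by (rule order_mult, simp)
  thus "Polynomial.order x ([:- c, 1:] * [:- d, 1:]) = 0 \<or> Polynomial.order x ([:- c, 1:] * [:- d, 1:]) = 1"
    unfolding order_linear' using assms by auto
qed

lemma rsquarefree_linear: "rsquarefree [:c, 1:]" for c :: "'a::idom"
proof -
  have "Polynomial.order x [:c, 1:] \<le> 1" for x using order_degree[of "[:c, 1:]" x] by simp
  thus ?thesis unfolding rsquarefree_def by (auto simp: le_Suc_eq)
qed

lemma minpoly_two:
  fixes a b :: "'a::field"
  defines "p \<equiv> (if a = b then [:-a, 1:] else [:-a, 1:] * [:-b, 1:])"
  shows "Polynomial.lead_coeff p = 1" "poly p a = 0" "poly p b = 0"
    "\<And>q. q \<noteq> 0 \<Longrightarrow> poly q a = 0 \<Longrightarrow> poly q b = 0 \<Longrightarrow> Polynomial.degree p \<le> Polynomial.degree q"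
    "rsquarefree (map_poly (to_ac :: 'a \<Rightarrow> 'a alg_closure) p)"
proof -
  show "Polynomial.lead_coeff p = 1" unfolding p_def by (simp add: lead_coeff_mult)
  show "poly p a = 0" "poly p b = 0" unfolding p_def by auto
  fix q :: "'a poly" assume q: "q \<noteq> 0" "poly q a = 0" "poly q b = 0"
  have "p dvd q"
  proof (cases "a = b")
    case True thus ?thesis using q unfolding p_def by (simp add: poly_eq_0_iff_dvd[symmetric])
  next
    case False
    obtain r where r: "q = [:-a, 1:] * r" using q(2) unfolding poly_eq_0_iff_dvd by (auto elim: dvdE)
    have "poly r b = 0" using q(3) False unfolding r by auto
    then obtain s where s: "r = [:-b, 1:] * s" unfolding poly_eq_0_iff_dvd by (auto elim: dvdE)
    have "q = ([:-a, 1:] * [:-b, 1:]) * s" using r s by (simp only: mult.assoc)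
    moreover have "p = [:-a, 1:] * [:-b, 1:]" using False unfolding p_def by simp
    ultimately show ?thesis by (metis dvd_triv_left)
  qed
  thus "Polynomial.degree p \<le> Polynomial.degree q" using q(1) by (rule dvd_imp_degree_le)
next
  show "rsquarefree (map_poly (to_ac :: 'a \<Rightarrow> 'a alg_closure) p)"
  proof (cases "a = b")
    case True thus ?thesis unfolding p_def by (simp add: rsquarefree_linear)
  next
    case False
    have e: "map_poly (to_ac :: 'a \<Rightarrow> 'a alg_closure) p = [:- to_ac a, 1:] * [:- to_ac b, 1:]"
      unfolding p_def using False by (simp add: to_ac_poly.hom_mult)
    show ?thesis unfolding e by (rule rsquarefree_two, simp add: False)
  qed
qed

definition wit :: "nat \<Rightarrow> 'a::field \<Rightarrow> 'a \<Rightarrow> 'a mat" where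
  "wit g a b = borel_block g (a \<cdot>\<^sub>m 1\<^sub>m g) (inverse a \<cdot>\<^sub>m 1\<^sub>m g) (a*b) (0\<^sub>m g g)"

lemma wit_props:
  fixes a b :: "'a::field"
  assumes g: "g \<ge> 1" and a: "a \<noteq> 0" and b: "b \<noteq> 0"
  shows "wit g a b \<in> B2g g" "wit g a b \<in> GSp g" "eigen_split g (wit g a b)"
    "mat_trace (wit g a b) = of_nat g * (a + b)" "semisimple (wit g a b)"
proof -
  let ?A = "a \<cdot>\<^sub>m 1\<^sub>m g :: 'a mat" and ?Ai = "inverse a \<cdot>\<^sub>m 1\<^sub>m g :: 'a mat"
  have Ac: "?A \<in> carrier_mat g g" and Aic: "?Ai \<in> carrier_mat g g" by auto
  have AAi: "?A * ?Ai = 1\<^sub>m g" using a by (intro eq_matI, auto simp: scalar_prod_def sum_single[of _ g])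
  have AiA: "?Ai * ?A = 1\<^sub>m g" by (rule mat_mult_left_right_inverse[OF Ac Aic AAi])
  have Bor: "?A \<in> Borel_g g" unfolding Borel_g_def using invertible_matI[OF Ac Aic AAi] 
    by (auto simp: upper_triangular_def)
  have inv: "is_inverse_mat g ?A ?Ai" unfolding is_inverse_mat_def using AAi AiA by auto
  have ab: "a * b \<noteq> 0" using a b by auto
  have z: "transpose_mat (0\<^sub>m g g :: 'a mat) = 0\<^sub>m g g" "(0\<^sub>m g g :: 'a mat) \<in> carrier_mat g g" by (rule eq_matI, auto)
  show B: "wit g a b \<in> B2g g" unfolding wit_def B2g_def using Bor inv ab z by blast
  thus "wit g a b \<in> GSp g" by (rule B2g_GSp)
  show "eigen_split g (wit g a b)" by (rule B2g_eigen_split[OF g B])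
  define f where "f = (\<lambda>i::nat. if i < g then a else b)"
  have W: "wit g a b = mat_diag (2*g) f"
  proof (rule eq_matI)
    fix i j assume ij: "i < dim_row (mat_diag (2*g) f)" "j < dim_col (mat_diag (2*g) f)"
    hence ij: "i < 2*g" "j < 2*g" by auto
    show "wit g a b $$ (i,j) = mat_diag (2*g) f $$ (i,j)"
      unfolding wit_def borel_block_index[OF Ac Aic zero_carrier_mat ij] using ij a
      by (auto simp: mat_diag_def f_def)
  qed (insert borel_block_carrier[OF Ac Aic zero_carrier_mat], auto simp: wit_def)
  have "mat_trace (wit g a b) = (\<Sum>i\<in>{0..<2*g}. f i)" unfolding W mat_trace_def mat_diag_def 
    by (simp add: atLeast0LessThan)
  also have "\<dots> = (\<Sum>i\<in>{0..<g}. f i) + (\<Sum>i\<in>{g..<2*g}. f i)"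
  proof -
    have "{0..<2*g} = {0..<g} \<union> {g..<2*g}" by auto
    thus ?thesis by (simp add: sum.union_disjoint)
  qed
  also have "(\<Sum>i\<in>{0..<g}. f i) = of_nat g * a" unfolding f_def by simp
  also have "(\<Sum>i\<in>{g..<2*g}. f i) = of_nat g * b" unfolding f_def by simp
  finally show "mat_trace (wit g a b) = of_nat g * (a + b)" by (simp add: algebra_simps)
  define p where "p = (if a = b then [:-a, 1:] else [:-a, 1:] * [:-b, 1:])"
  note mp = minpoly_two[where a=a and b=b, folded p_def]
  have dr: "dim_row (wit g a b) = 2*g" unfolding W by simp
  have "is_minimal_poly (wit g a b) p" unfolding is_minimal_poly_def dr
  proof (intro conjI allI impI)
    show "Polynomial.lead_coeff p = 1" by (rule mp(1))
    show "poly_mat_eval p (wit g a b) = 0\<^sub>m (2 * g) (2 * g)" unfolding W poly_mat_eval_diag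
      by (rule eq_matI, auto simp: mat_diag_def f_def mp(2,3))
    fix q assume q: "q \<noteq> 0 \<and> poly_mat_eval q (wit g a b) = 0\<^sub>m (2 * g) (2 * g)"
    have "poly_mat_eval q (wit g a b) $$ (0,0) = 0" "poly_mat_eval q (wit g a b) $$ (g,g) = 0"
      using q g by auto
    hence "poly q a = 0" "poly q b = 0" unfolding W poly_mat_eval_diag using g by (auto simp: mat_diag_def f_def)
    thus "Polynomial.degree p \<le> Polynomial.degree q" using mp(4) q by blast
  qed
  thus "semisimple (wit g a b)" unfolding semisimple_def using mp(5) by blast
qed


lemma field_facts:
  assumes p: "Factorial_Ring.prime (card (UNIV :: 'a::{finite,field} set))"
    and nd: "\<not> card (UNIV :: 'a set) dvd 2 * g"
  shows "of_nat g \<noteq> (0::'a)" "card (UNIV :: 'a set) \<ge> 3"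
proof -
  have "CHAR('a) dvd card (UNIV :: 'a set)" by (rule CHAR_dvd_CARD)
  moreover have "CHAR('a) \<noteq> 1" by simp
  ultimately have C: "CHAR('a) = card (UNIV :: 'a set)" using p unfolding prime_nat_iff by auto
  have "\<not> card (UNIV :: 'a set) dvd g" using nd by (meson dvd_mult)
  thus "of_nat g \<noteq> (0::'a)" unfolding of_nat_eq_0_iff_char_dvd C .
  have "card (UNIV :: 'a set) \<ge> 2" using p by (simp add: prime_ge_2_nat)
  moreover have "card (UNIV :: 'a set) \<noteq> 2" using nd by auto
  ultimately show "card (UNIV :: 'a set) \<ge> 3" by simp
qed

lemma exists_ab:
  assumes "card (UNIV :: 'a::{finite,field} set) \<ge> 3"
  shows "\<exists>a b :: 'a. a \<noteq> 0 \<and> b \<noteq> 0 \<and> a + b = s"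
proof -
  have "card {0, s} \<le> (2::nat)" by (rule order.trans[OF card_insert_le_m1], auto)
  hence "\<not> (UNIV :: 'a set) \<subseteq> {0, s}" using assms by (metis card_mono finite.emptyI finite.insertI le_trans not_less_eq_eq numeral_3_eq_3 numeral_2_eq_2)
  then obtain a :: 'a where "a \<notin> {0, s}" by auto
  thus ?thesis by (intro exI[of _ a] exI[of _ "s - a"], auto)
qed

lemma witness_t:
  assumes g: "g \<ge> 1" and p: "Factorial_Ring.prime (card (UNIV :: 'a::{finite,field} set))"
    and nd: "\<not> card (UNIV :: 'a set) dvd 2 * g"
  shows "\<exists>D :: 'a mat. D \<in> Css g t \<and> D \<in> CB g t"
proof -
  note ff = field_facts[OF p nd]
  obtain a b :: 'a where ab: "a \<noteq> 0" "b \<noteq> 0" "a + b = - of_int t / of_nat g" using exists_ab[OF ff(2)] by blast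
  note w = wit_props[OF g ab(1,2)]
  have tr: "mat_trace (wit g a b) = - of_int t" unfolding w(4) ab(3) using ff(1) by simp
  have "wit g a b \<in> Cset g t" unfolding Cset_def using w(2,3) tr by simp
  thus ?thesis unfolding Css_def CB_def using w(1,5) by blast
qed

lemma U2g_props:
  assumes "U \<in> (U2g g :: 'a::field mat set)"
  shows "U \<in> B2g g" "\<And>i. i < 2*g \<Longrightarrow> U $$ (i,i) = 1"
proof -
  obtain A Ai S where U: "U = borel_block g A Ai 1 S" and h: "A \<in> Unip_g g" "is_inverse_mat g A Ai"
     "S \<in> carrier_mat g g" "transpose_mat S = S" using assms unfolding U2g_def by blast
  have Bor: "A \<in> Borel_g g" using h(1) unfolding Unip_g_def by auto
  have one: "(1::'a) \<noteq> 0" by simp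
  show "U \<in> B2g g" unfolding U B2g_def using Bor h one by blast
  note p = borel_block_props[OF Bor h(2) one h(3,4)]
  fix i assume i: "i < 2*g"
  show "U $$ (i,i) = 1"
  proof (cases "i < g")
    case True thus ?thesis unfolding U p(3)[OF True] using h(1) unfolding Unip_g_def by auto
  next
    case False
    hence i': "i - g < g" "i = (i - g) + g" using i by auto
    have "A $$ (i-g,i-g) = 1" using h(1) i' unfolding Unip_g_def by auto
    thus ?thesis unfolding U using p(4)[OF i'(1)] p(5)[OF i'(1)] i'(2) by (metis mult_1)
  qed
qed

lemma U'2g_props:
  assumes g: "g \<ge> 1" and "U \<in> (U'2g g :: 'a::field mat set)"
  shows "U \<in> B2g g" "\<exists>c. \<forall>i < 2*g. U $$ (i,i) = c"
proof -
  obtain A Ai S where U: "U = borel_block g A Ai ((dA A)^2) S" and h: "A \<in> Unip'_g g" "is_inverse_mat g A Ai"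
     "S \<in> carrier_mat g g" "transpose_mat S = S" using assms(2) unfolding U'2g_def by blast
  have Bor: "A \<in> Borel_g g" using h(1) unfolding Unip'_g_def by auto
  obtain c where c: "c \<noteq> 0" "\<And>i. i < g \<Longrightarrow> A $$ (i,i) = c" using h(1) unfolding Unip'_g_def by auto
  have dA: "dA A = c" unfolding dA_def using c(2)[of 0] g by simp
  have nz: "(dA A)^2 \<noteq> 0" using dA c by simp
  show "U \<in> B2g g" unfolding U B2g_def using Bor h nz by blast
  note p = borel_block_props[OF Bor h(2) nz h(3,4)]
  have "U $$ (i,i) = c" if i: "i < 2*g" for i
  proof (cases "i < g")
    case True thus ?thesis unfolding U p(3)[OF True] using c by auto
  next
    case False
    hence i': "i - g < g" "i = (i - g) + g" using i by auto
    have "c * Ai $$ (i-g,i-g) = 1" using p(5)[OF i'(1)] c(2)[OF i'(1)] by simp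
    hence "c^2 * Ai $$ (i-g,i-g) = c" by (simp add: power2_eq_square mult.assoc)
    thus ?thesis unfolding U using p(4)[OF i'(1)] i'(2) dA by metis
  qed
  thus "\<exists>c. \<forall>i < 2*g. U $$ (i,i) = c" by blast
qed

lemma B2g_carrier: "V \<in> B2g g \<Longrightarrow> V \<in> carrier_mat (2*g) (2*g)"
  unfolding B2g_iff sympl_def by auto

lemma B2g_shape: "V \<in> B2g g \<Longrightarrow> shape g V"
  unfolding B2g_iff by auto

lemma trace_diag_mult:
  assumes V: "V \<in> B2g g" and M: "M \<in> (B2g g :: 'a::field mat set)" and d: "\<And>i. i < 2*g \<Longrightarrow> V $$ (i,i) = c"
  shows "mat_trace (V * M) = c * mat_trace M"
proof -
  have Vc: "V \<in> carrier_mat (2*g) (2*g)" and Mc: "M \<in> carrier_mat (2*g) (2*g)" using V M by (auto simp: B2g_carrier)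
  note sm = shape_mult(2)[OF Vc Mc B2g_shape[OF V] B2g_shape[OF M]]
  have "mat_trace (V * M) = (\<Sum>i<2*g. c * M $$ (i,i))" unfolding mat_trace_def using Vc Mc
    by (intro sum.cong, auto simp del: index_mult_mat(1) simp add: sm d)
  also have "\<dots> = c * mat_trace M" unfolding mat_trace_def using Mc by (simp add: sum_distrib_left)
  finally show ?thesis .
qed

lemma mult_Cset:
  assumes g: "g \<ge> 1" and V: "V \<in> B2g g" and M: "M \<in> CB g t" and d: "\<And>i. i < 2*g \<Longrightarrow> V $$ (i,i) = c"
    and tr: "c * (- of_int t) = - of_int t'"
  shows "V * M \<in> (CB g t' :: 'a::field mat set)"
proof -
  have MB: "M \<in> B2g g" and MC: "M \<in> Cset g t" using M unfolding CB_def by auto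
  have VM: "V * M \<in> B2g g" by (rule B2g_mult[OF V MB])
  have "mat_trace (V * M) = c * mat_trace M" by (rule trace_diag_mult[OF V MB d])
  hence "mat_trace (V * M) = - of_int t'" using MC tr unfolding Cset_def by simp
  thus ?thesis unfolding CB_def Cset_def using VM B2g_GSp[OF VM] B2g_eigen_split[OF g VM] by simp
qed


definition om :: "nat \<Rightarrow> 'a::field vec \<Rightarrow> 'a vec \<Rightarrow> 'a" where
  "om g x y = (\<Sum>k<g. x $ k * y $ (k+g) - x $ (k+g) * y $ k)"

lemma om_col:
  assumes V: "V \<in> carrier_mat (2*g) n" and W: "W \<in> carrier_mat (2*g) m" and i: "i < n" and j: "j < m"
  shows "(transpose_mat V * Jmat g * W :: 'a::field mat) $$ (i,j) = om g (col V i) (col W j)"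
  unfolding omega_index[OF V W i j] om_def using V W i j by (intro sum.cong, auto)

lemma om_unit:
  assumes "i < 2*g" "j < 2*g"
  shows "om g (unit_vec (2*g) i) (unit_vec (2*g) j) = (Jmat g :: 'a::field mat) $$ (i,j)"
proof -
  have "(transpose_mat (1\<^sub>m (2*g)) * Jmat g * 1\<^sub>m (2*g) :: 'a mat) $$ (i,j) = om g (col (1\<^sub>m (2*g)) i) (col (1\<^sub>m (2*g)) j)"
    by (rule om_col, insert assms, auto)
  moreover have "(transpose_mat (1\<^sub>m (2*g)) * Jmat g * 1\<^sub>m (2*g) :: 'a mat) $$ (i,j) = Jmat g $$ (i,j)" using assms by simp
  moreover have "col (1\<^sub>m (2*g)) i = (unit_vec (2*g) i :: 'a vec)" "col (1\<^sub>m (2*g)) j = (unit_vec (2*g) j :: 'a vec)"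
    using assms by auto
  ultimately show ?thesis by metis
qed

lemma om_antisym: "om g x y = - om g y (x :: 'a::field vec)"
  unfolding om_def sum_negf[symmetric] by (rule sum.cong) (simp_all add: algebra_simps)

lemma om_self: "om g x (x :: 'a::field vec) = 0"
  unfolding om_def by (rule sum.neutral, simp add: algebra_simps)

lemma om_add_left:
  assumes "x \<in> carrier_vec (2*g)" "y \<in> carrier_vec (2*g)"
  shows "om g (x + a \<cdot>\<^sub>v y) z = om g x z + a * om g y (z :: 'a::field vec)"
  unfolding om_def using assms by (simp add: sum_distrib_left sum.distrib[symmetric] algebra_simps)

lemma om_add_right:
  assumes "x \<in> carrier_vec (2*g)" "y \<in> carrier_vec (2*g)"
  shows "om g z (x + a \<cdot>\<^sub>v y) = om g z x + a * om g z (y :: 'a::field vec)"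
  using om_add_left[OF assms, of a z] om_antisym[of g z] by (metis minus_add_distrib mult_minus_right)

lemma om_unit_right:
  assumes "j < 2*g"
  shows "om g u (unit_vec (2*g) j) = (if j < g then - u $ (j+g) else u $ (j-g))"
proof (cases "j < g")
  case True
  have "om g u (unit_vec (2*g) j) = (\<Sum>k\<in>{0..<g}. if k = j then - u $ (k+g) else 0)"
    unfolding om_def atLeast0LessThan[symmetric] by (rule sum.cong, insert assms True, auto)
  also have "\<dots> = - u $ (j+g)" using True by (subst sum.delta, auto)
  finally show ?thesis using True by simp
next
  case False
  have "om g u (unit_vec (2*g) j) = (\<Sum>k\<in>{0..<g}. if k = j - g then u $ k else 0)"
    unfolding om_def atLeast0LessThan[symmetric] by (rule sum.cong, insert assms False, auto)
  also have "\<dots> = u $ (j-g)" using False assms by (subst sum.delta, auto)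
  finally show ?thesis using False by simp
qed

lemma om_expand:
  assumes x: "x \<in> carrier_vec (2*g)"
  shows "(\<Sum>j\<in>{0..<2*g}. om g u (unit_vec (2*g) j) * x $ j) = om g u (x :: 'a::field vec)"
proof -
  have "(\<Sum>j\<in>{0..<2*g}. om g u (unit_vec (2*g) j) * x $ j) = 
     (\<Sum>j\<in>{0..<2*g}. (if j < g then - u $ (j+g) else u $ (j-g)) * x $ j)"
    by (rule sum.cong, auto simp: om_unit_right)
  also have "\<dots> = (\<Sum>j\<in>{0..<g}. - u $ (j+g) * x $ j) + (\<Sum>j\<in>{g..<2*g}. u $ (j-g) * x $ j)"
  proof -
    have "{0..<2*g} = {0..<g} \<union> {g..<2*g}" by auto
    thus ?thesis by (simp add: sum.union_disjoint)
  qed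
  also have "(\<Sum>j\<in>{g..<2*g}. u $ (j-g) * x $ j) = (\<Sum>j\<in>{0..<g}. u $ j * x $ (j+g))"
    using sum.shift_bounds_nat_ivl[of "\<lambda>j. u $ (j-g) * x $ j" 0 g g] by (simp add: mult_2)
  finally show ?thesis unfolding om_def by (simp add: atLeast0LessThan sum_negf[symmetric] sum.distrib[symmetric] algebra_simps)
qed

definition tv :: "nat \<Rightarrow> 'a::field \<Rightarrow> 'a vec \<Rightarrow> 'a mat" where
  "tv g c u = mat (2*g) (2*g) (\<lambda>(i,j). (if i = j then 1 else 0) + c * om g u (unit_vec (2*g) j) * u $ i)"

lemma tv_carrier: "tv g c u \<in> carrier_mat (2*g) (2*g)" unfolding tv_def by simp

lemma tv_col:
  assumes u: "u \<in> carrier_vec (2*g)" and j: "j < 2*g"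
  shows "col (tv g c u) j = unit_vec (2*g) j + (c * om g u (unit_vec (2*g) j)) \<cdot>\<^sub>v u"
  by (rule eq_vecI, insert u j, auto simp: tv_def)

lemma tv_mult_vec:
  assumes u: "u \<in> carrier_vec (2*g)" and x: "x \<in> carrier_vec (2*g)"
  shows "tv g c u *\<^sub>v x = x + (c * om g u x) \<cdot>\<^sub>v u"
proof (rule eq_vecI)
  fix i assume "i < dim_vec (x + (c * om g u x) \<cdot>\<^sub>v u)"
  hence i: "i < 2*g" using u by auto
  have "(tv g c u *\<^sub>v x) $ i = (\<Sum>j\<in>{0..<2*g}. ((if i = j then 1 else 0) + c * om g u (unit_vec (2*g) j) * u $ i) * x $ j)"
    using i x unfolding tv_def by (simp add: scalar_prod_def)
  also have "\<dots> = (\<Sum>j\<in>{0..<2*g}. (if i = j then x $ j else 0)) + c * u $ i * (\<Sum>j\<in>{0..<2*g}. om g u (unit_vec (2*g) j) * x $ j)"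
    by (subst sum_distrib_left, subst sum.distrib[symmetric], rule sum.cong, auto simp: algebra_simps)
  also have "\<dots> = x $ i + c * u $ i * om g u x"
  proof -
    have d: "(\<Sum>j\<in>{0..<2*g}. (if i = j then x $ j else 0)) = x $ i" using i by (subst sum.delta', auto)
    show ?thesis unfolding d om_expand[OF x] ..
  qed
  finally show "(tv g c u *\<^sub>v x) $ i = (x + (c * om g u x) \<cdot>\<^sub>v u) $ i" using i u x by (simp add: ac_simps)
qed (insert u x, auto simp: tv_def)

lemma tv_sympl:
  assumes u: "u \<in> carrier_vec (2*g)"
  shows "sympl g 1 (tv g c u)"
proof -
  have T: "tv g c u \<in> carrier_mat (2*g) (2*g)" by (rule tv_carrier)
  have "transpose_mat (tv g c u) * Jmat g * tv g c u = Jmat g"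
  proof (rule eq_matI)
    fix i j assume ij: "i < dim_row (Jmat g :: 'a mat)" "j < dim_col (Jmat g :: 'a mat)"
    hence ij: "i < 2*g" "j < 2*g" by auto
    let ?ei = "unit_vec (2*g) i :: 'a vec" and ?ej = "unit_vec (2*g) j :: 'a vec"
    let ?ai = "c * om g u ?ei" and ?aj = "c * om g u ?ej"
    have ei: "?ei \<in> carrier_vec (2*g)" and ej: "?ej \<in> carrier_vec (2*g)" by auto
    have "(transpose_mat (tv g c u) * Jmat g * tv g c u) $$ (i,j) = om g (?ei + ?ai \<cdot>\<^sub>v u) (?ej + ?aj \<cdot>\<^sub>v u)"
      unfolding om_col[OF T T ij] tv_col[OF u ij(1)] tv_col[OF u ij(2)] ..
    also have "\<dots> = om g ?ei ?ej + ?aj * om g ?ei u + ?ai * (om g u ?ej + ?aj * om g u u)"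
      unfolding om_add_left[OF ei u] om_add_right[OF ej u] by (simp add: algebra_simps)
    also have "\<dots> = Jmat g $$ (i,j)"
    proof -
      have h1: "om g ?ei u = - om g u ?ei" by (rule om_antisym)
      have h2: "om g u u = 0" by (rule om_self)
      show ?thesis unfolding h1 h2 om_unit[OF ij] by (simp add: algebra_simps)
    qed
    finally show "(transpose_mat (tv g c u) * Jmat g * tv g c u) $$ (i,j) = Jmat g $$ (i,j)" .
  qed (insert T, auto)
  thus ?thesis using T by (simp add: sympl_def)
qed

lemma tv_move:
  assumes x: "x \<in> carrier_vec (2*g)" and y: "y \<in> carrier_vec (2*g)" and nz: "om g y x \<noteq> (0::'a::field)"
  shows "tv g (inverse (om g y x)) (y - x) *\<^sub>v x = y"
proof -
  have u: "y - x \<in> carrier_vec (2*g)" using x y by simp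
  have "om g (y - x) x = om g y x"
  proof -
    have "y - x = y + (-1) \<cdot>\<^sub>v x" by (rule eq_vecI, insert x y, auto)
    thus ?thesis using om_add_left[OF y x, of "-1" x] om_self[of g x] by simp
  qed
  hence "tv g (inverse (om g y x)) (y - x) *\<^sub>v x = x + 1 \<cdot>\<^sub>v (y - x)"
    unfolding tv_mult_vec[OF u x] using nz by simp
  also have "\<dots> = y" by (rule eq_vecI, insert x y, auto)
  finally show ?thesis .
qed

lemma sp_transitive:
  assumes g: "g \<ge> 1" and v: "v \<in> carrier_vec (2*g)" and vnz: "v \<noteq> 0\<^sub>v (2*g)"
  shows "\<exists>T. sympl g (1::'a::field) T \<and> T *\<^sub>v unit_vec (2*g) 0 = v"
proof -
  let ?e = "unit_vec (2*g) 0 :: 'a vec"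
  have e: "?e \<in> carrier_vec (2*g)" by simp
  have move: "\<exists>T. sympl g (1::'a) T \<and> T *\<^sub>v x = y" if x: "x \<in> carrier_vec (2*g)" and y: "y \<in> carrier_vec (2*g)"
    and nz: "om g y x \<noteq> 0" for x y
    using tv_sympl[of "y - x" g "inverse (om g y x)"] tv_move[OF x y nz] x y by auto
  have move2: "\<exists>T. sympl g (1::'a) T \<and> T *\<^sub>v ?e = v" if z: "z \<in> carrier_vec (2*g)" and n1: "om g z ?e \<noteq> 0"
    and n2: "om g v z \<noteq> 0" for z
  proof -
    obtain T1 where T1: "sympl g 1 T1" "T1 *\<^sub>v ?e = z" using move[OF e z n1] by blast
    obtain T2 where T2: "sympl g 1 T2" "T2 *\<^sub>v z = v" using move[OF z v n2] by blast
    have "sympl g (1*1) (T2 * T1)" by (rule sympl_mult[OF T2(1) T1(1)])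
    moreover have "(T2 * T1) *\<^sub>v ?e = v"
    proof -
      have c1: "T1 \<in> carrier_mat (2*g) (2*g)" "T2 \<in> carrier_mat (2*g) (2*g)" using T1 T2 by (auto simp: sympl_def)
      have "(T2 * T1) *\<^sub>v ?e = T2 *\<^sub>v (T1 *\<^sub>v ?e)" by (rule assoc_mult_mat_vec[OF c1(2) c1(1) e])
      thus ?thesis using T1(2) T2(2) by simp
    qed
    ultimately show ?thesis by auto
  qed
  show ?thesis
  proof (cases "om g v ?e = 0")
    case False thus ?thesis using move[OF e v] by blast
  next
    case True
    obtain i where i: "i < 2*g" "v $ i \<noteq> 0" using v vnz by (metis eq_vecI carrier_vecD index_zero_vec(1,2))
    let ?a = "unit_vec (2*g) g :: 'a vec"
    let ?p = "if i < g then i + g else i - g"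
    let ?b = "unit_vec (2*g) ?p :: 'a vec"
    have a: "?a \<in> carrier_vec (2*g)" and b: "?b \<in> carrier_vec (2*g)" by auto
    have pa: "?p < 2*g" using i by auto
    have oa: "om g ?a ?e \<noteq> 0" using om_unit[of g "2*g" 0] g by (simp add: Jmat_index pr_def om_unit)
    have ob: "om g v ?b \<noteq> 0" using i unfolding om_unit_right[OF pa] by auto
    show ?thesis
    proof (cases "om g v ?a = 0")
      case False thus ?thesis using move2[OF a oa] by blast
    next
      case va: True
      show ?thesis
      proof (cases "om g ?b ?e = 0")
        case False thus ?thesis using move2[OF b False ob] by blast
      next
        case be: True
        have ab: "?a + 1 \<cdot>\<^sub>v ?b \<in> carrier_vec (2*g)" by simp
        have "om g (?a + 1 \<cdot>\<^sub>v ?b) ?e = om g ?a ?e" using om_add_left[OF a b, of 1 ?e] be by simp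
        moreover have "om g v (?a + 1 \<cdot>\<^sub>v ?b) = om g v ?b" using om_add_right[OF a b, of v 1] va by simp
        ultimately show ?thesis using move2[OF ab] oa ob by auto
      qed
    qed
  qed
qed


definition iota :: "nat \<Rightarrow> nat \<Rightarrow> nat" where "iota h c = Suc (if c < h then c else Suc c)"
definition kappa :: "nat \<Rightarrow> nat \<Rightarrow> nat" where "kappa h i = (if i < Suc h then i - 1 else i - 2)"

lemma iota_facts:
  "c < 2*h \<Longrightarrow> iota h c < 2 * Suc h" "iota h c \<noteq> 0" "iota h c \<noteq> Suc h" "kappa h (iota h c) = c"
  "iota h c < Suc h \<longleftrightarrow> c < h" "iota h c = iota h d \<longleftrightarrow> c = d"
  unfolding iota_def kappa_def by auto

lemma iota_simps[simp]: "(iota h c = 0) = False" "(0 = iota h c) = False" "(iota h c = Suc h) = False"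
  "(Suc h = iota h c) = False" "kappa h (iota h c) = c" "(iota h c = iota h d) = (c = d)"
  unfolding iota_def kappa_def by auto

lemma iota_lt[simp]: "c < 2*h \<Longrightarrow> iota h c < Suc (Suc (2*h))" "c < 2*h \<Longrightarrow> iota h c < 2 * Suc h"
  unfolding iota_def by auto

lemma kappa_facts:
  assumes "i < 2 * Suc h" "i \<noteq> 0" "i \<noteq> Suc h"
  shows "iota h (kappa h i) = i" "kappa h i < 2*h"
  using assms unfolding iota_def kappa_def by auto

lemma sum_remove_index:
  assumes "m \<le> n"
  shows "(\<Sum>k<Suc n. f k) = f m + (\<Sum>c<n. f (if c < m then c else Suc c))"
proof -
  let ?h = "\<lambda>c. if c < m then c else Suc c"
  have inj: "inj_on ?h {..<n}" by (auto simp: inj_on_def split: if_splits)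
  have im: "?h ` {..<n} = {..<Suc n} - {m}"
  proof
    show "?h ` {..<n} \<subseteq> {..<Suc n} - {m}" using assms by auto
    show "{..<Suc n} - {m} \<subseteq> ?h ` {..<n}"
    proof
      fix x assume x: "x \<in> {..<Suc n} - {m}"
      show "x \<in> ?h ` {..<n}"
      proof (cases "x < m")
        case True thus ?thesis using x assms by (intro image_eqI[of _ _ x], auto)
      next
        case False thus ?thesis using x assms by (intro image_eqI[of _ _ "x - 1"], auto)
      qed
    qed
  qed
  have "(\<Sum>k<Suc n. f k) = f m + (\<Sum>k\<in>{..<Suc n} - {m}. f k)" using assms by (subst sum.remove[of _ m], auto)
  also have "(\<Sum>k\<in>{..<Suc n} - {m}. f k) = (\<Sum>c<n. f (?h c))" unfolding im[symmetric] by (rule sum.reindex[OF inj, unfolded o_def])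
  finally show ?thesis .
qed

lemma sum_iota: "(\<Sum>k<2 * Suc h. f k) = f 0 + f (Suc h) + (\<Sum>c<2*h. f (iota h c))"
proof -
  have "(\<Sum>k<2 * Suc h. f k) = (\<Sum>k<Suc (Suc (2*h)). f k)" by simp
  also have "\<dots> = f 0 + (\<Sum>k<Suc (2*h). f (Suc k))" by (rule sum.lessThan_Suc_shift)
  also have "(\<Sum>k<Suc (2*h). f (Suc k)) = f (Suc h) + (\<Sum>c<2*h. f (Suc (if c < h then c else Suc c)))"
    by (subst sum_remove_index[of h], auto)
  finally show ?thesis unfolding iota_def by (simp add: add.assoc)
qed

definition dv :: "nat \<Rightarrow> 'a vec \<Rightarrow> 'a vec" where "dv h x = vec (2*h) (\<lambda>c. x $ iota h c)"
definition dm :: "nat \<Rightarrow> 'a mat \<Rightarrow> 'a mat" where "dm h V = mat (2*h) (2*h) (\<lambda>(a,b). V $$ (iota h a, iota h b))"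

lemma om_split:
  assumes x: "x \<in> carrier_vec (2 * Suc h)" and y: "y \<in> carrier_vec (2 * Suc h)"
  shows "om (Suc h) x y = (x $ 0 * y $ (Suc h) - x $ (Suc h) * y $ 0) + om h (dv h x) (dv h (y :: 'a::field vec))"
proof -
  have "om (Suc h) x y = (x $ 0 * y $ (0 + Suc h) - x $ (0 + Suc h) * y $ 0) +
    (\<Sum>c<h. x $ Suc c * y $ (Suc c + Suc h) - x $ (Suc c + Suc h) * y $ Suc c)"
    unfolding om_def by (rule sum.lessThan_Suc_shift)
  also have "(\<Sum>c<h. x $ Suc c * y $ (Suc c + Suc h) - x $ (Suc c + Suc h) * y $ Suc c) = om h (dv h x) (dv h y)"
    unfolding om_def dv_def by (rule sum.cong, auto simp: iota_def)
  finally show ?thesis by simp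
qed

lemma J_iota:
  assumes "a < 2*h" "b < 2*h"
  shows "(Jmat (Suc h) :: 'a::field mat) $$ (iota h a, iota h b) = Jmat h $$ (a,b)"
  using assms iota_facts(1)[of a h] iota_facts(1)[of b h] 
  by (simp add: Jmat_index pr_def iota_def, auto)

lemma col_dm:
  assumes V: "V \<in> carrier_mat (2 * Suc h) (2 * Suc h)" and a: "a < 2*h"
  shows "col (dm h V) a = dv h (col V (iota h a))"
proof (rule eq_vecI)
  fix i assume "i < dim_vec (dv h (col V (iota h a)))"
  hence i: "i < 2*h" by (simp add: dv_def)
  have "iota h i < 2 * Suc h" "iota h a < 2 * Suc h" using iota_facts(1) i a by auto
  thus "col (dm h V) a $ i = dv h (col V (iota h a)) $ i" using V i a by (simp add: dm_def dv_def)
qed (simp add: dm_def dv_def)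

lemma dm_carrier: "dm h V \<in> carrier_mat (2*h) (2*h)" unfolding dm_def by simp

lemma sympl_dm:
  assumes V: "V \<in> carrier_mat (2 * Suc h) (2 * Suc h)" and sy: "sympl (Suc h) \<mu> V"
    and row: "\<And>b. b < 2*h \<Longrightarrow> V $$ (Suc h, iota h b) = 0"
  shows "sympl h \<mu> (dm h (V :: 'a::field mat))"
proof -
  have e: "transpose_mat V * Jmat (Suc h) * V = \<mu> \<cdot>\<^sub>m Jmat (Suc h)" using sy by (simp add: sympl_def)
  have "transpose_mat (dm h V) * Jmat h * dm h V = \<mu> \<cdot>\<^sub>m Jmat h"
  proof (rule eq_matI)
    fix a b assume ab: "a < dim_row (\<mu> \<cdot>\<^sub>m Jmat h :: 'a mat)" "b < dim_col (\<mu> \<cdot>\<^sub>m Jmat h :: 'a mat)"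
    hence ab: "a < 2*h" "b < 2*h" by auto
    note ia = iota_facts(1)[OF ab(1)] and ib = iota_facts(1)[OF ab(2)]
    have "(transpose_mat (dm h V) * Jmat h * dm h V) $$ (a,b) = om h (dv h (col V (iota h a))) (dv h (col V (iota h b)))"
      unfolding om_col[OF dm_carrier dm_carrier ab] col_dm[OF V ab(1)] col_dm[OF V ab(2)] ..
    also have "\<dots> = om (Suc h) (col V (iota h a)) (col V (iota h b))"
      using om_split[of "col V (iota h a)" h "col V (iota h b)"] V ia ib row[OF ab(1)] row[OF ab(2)] by simp
    also have "\<dots> = (transpose_mat V * Jmat (Suc h) * V) $$ (iota h a, iota h b)"
      by (rule om_col[symmetric, OF V V ia ib])
    also have "\<dots> = \<mu> * Jmat h $$ (a,b)" unfolding e using ia ib J_iota[OF ab, where 'a='a] by simp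
    finally show "(transpose_mat (dm h V) * Jmat h * dm h V) $$ (a,b) = (\<mu> \<cdot>\<^sub>m Jmat h) $$ (a,b)" using ab by simp
  qed (auto simp: dm_def)
  thus ?thesis using dm_carrier by (simp add: sympl_def)
qed


definition emb :: "nat \<Rightarrow> 'a::field mat \<Rightarrow> 'a mat" where
  "emb h Z = mat (2 * Suc h) (2 * Suc h) (\<lambda>(i,j). if i = 0 \<or> i = Suc h \<or> j = 0 \<or> j = Suc h 
     then (if i = j then 1 else 0) else Z $$ (kappa h i, kappa h j))"

lemma emb_carrier: "emb h Z \<in> carrier_mat (2 * Suc h) (2 * Suc h)" unfolding emb_def by simp

lemma emb_index:
  assumes "i < 2 * Suc h" "j < 2 * Suc h"
  shows "emb h Z $$ (i,j) = (if i = 0 \<or> i = Suc h \<or> j = 0 \<or> j = Suc h 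
     then (if i = j then 1 else 0) else Z $$ (kappa h i, kappa h j))"
  using assms unfolding emb_def by simp

lemma emb_mult_left:
  assumes W: "W \<in> carrier_mat (2 * Suc h) m" and i: "i < 2 * Suc h" and j: "j < m"
  shows "(emb h Z * W) $$ (i,j) = (if i = 0 \<or> i = Suc h then W $$ (i,j) 
     else (\<Sum>c<2*h. Z $$ (kappa h i, c) * W $$ (iota h c, j)))"
proof -
  have "(emb h Z * W) $$ (i,j) = (\<Sum>k<2 * Suc h. emb h Z $$ (i,k) * W $$ (k,j))"
    using W i j by (simp add: scalar_prod_def emb_def atLeast0LessThan)
  also have "\<dots> = emb h Z $$ (i,0) * W $$ (0,j) + emb h Z $$ (i, Suc h) * W $$ (Suc h,j) +
     (\<Sum>c<2*h. emb h Z $$ (i, iota h c) * W $$ (iota h c, j))" by (rule sum_iota)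
  also have "(\<Sum>c<2*h. emb h Z $$ (i, iota h c) * W $$ (iota h c, j)) = 
     (if i = 0 \<or> i = Suc h then 0 else (\<Sum>c<2*h. Z $$ (kappa h i, c) * W $$ (iota h c, j)))"
    using i by (auto simp: emb_index intro!: sum.cong)
  finally show ?thesis using i by (auto simp: emb_index)
qed

lemma emb_mult_right:
  assumes W: "W \<in> carrier_mat m (2 * Suc h)" and i: "i < m" and j: "j < 2 * Suc h"
  shows "(W * emb h Z) $$ (i,j) = (if j = 0 \<or> j = Suc h then W $$ (i,j) 
     else (\<Sum>c<2*h. W $$ (i, iota h c) * Z $$ (c, kappa h j)))"
proof -
  have "(W * emb h Z) $$ (i,j) = (\<Sum>k<2 * Suc h. W $$ (i,k) * emb h Z $$ (k,j))"
    using W i j by (simp add: scalar_prod_def emb_def atLeast0LessThan)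
  also have "\<dots> = W $$ (i,0) * emb h Z $$ (0,j) + W $$ (i,Suc h) * emb h Z $$ (Suc h,j) +
     (\<Sum>c<2*h. W $$ (i, iota h c) * emb h Z $$ (iota h c, j))" by (rule sum_iota)
  also have "(\<Sum>c<2*h. W $$ (i, iota h c) * emb h Z $$ (iota h c, j)) = 
     (if j = 0 \<or> j = Suc h then 0 else (\<Sum>c<2*h. W $$ (i, iota h c) * Z $$ (c, kappa h j)))"
    using j by (auto simp: emb_index intro!: sum.cong)
  finally show ?thesis using j by (auto simp: emb_index)
qed

lemma emb_mult:
  assumes Z: "Z \<in> carrier_mat (2*h) (2*h)" and Z2: "Z2 \<in> carrier_mat (2*h) (2*h)"
  shows "emb h Z * emb h Z2 = emb h (Z * Z2)"
proof (rule eq_matI)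
  fix i j assume ij: "i < dim_row (emb h (Z * Z2))" "j < dim_col (emb h (Z * Z2))"
  hence ij: "i < 2 * Suc h" "j < 2 * Suc h" by (auto simp: emb_def)
  show "(emb h Z * emb h Z2) $$ (i,j) = emb h (Z * Z2) $$ (i,j)"
  proof (cases "i = 0 \<or> i = Suc h")
    case True thus ?thesis unfolding emb_mult_left[OF emb_carrier ij] using ij by (auto simp: emb_index)
  next
    case False
    note kf = kappa_facts[OF ij(1)] 
    show ?thesis
    proof (cases "j = 0 \<or> j = Suc h")
      case True 
      thus ?thesis unfolding emb_mult_left[OF emb_carrier ij] using ij False by (auto simp: emb_index)
    next
      case F2: False
      note kf2 = kappa_facts[OF ij(2)]
      have "(\<Sum>c<2*h. Z $$ (kappa h i, c) * emb h Z2 $$ (iota h c, j)) = (\<Sum>c<2*h. Z $$ (kappa h i, c) * Z2 $$ (c, kappa h j))"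
        using ij F2 by (intro sum.cong, auto simp: emb_index)
      also have "\<dots> = (Z * Z2) $$ (kappa h i, kappa h j)" using Z Z2 kf(2) kf2(2) False F2
        by (simp add: scalar_prod_def atLeast0LessThan)
      finally show ?thesis unfolding emb_mult_left[OF emb_carrier ij] using ij False F2 by (simp add: emb_index)
    qed
  qed
qed (auto simp: emb_def)

lemma emb_one: "emb h (1\<^sub>m (2*h)) = (1\<^sub>m (2 * Suc h) :: 'a::field mat)"
proof (rule eq_matI)
  fix i j assume ij: "i < dim_row (1\<^sub>m (2 * Suc h) :: 'a mat)" "j < dim_col (1\<^sub>m (2 * Suc h) :: 'a mat)"
  hence ij: "i < 2 * Suc h" "j < 2 * Suc h" by auto
  show "emb h (1\<^sub>m (2*h)) $$ (i,j) = (1\<^sub>m (2 * Suc h) :: 'a mat) $$ (i,j)"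
  proof (cases "i = 0 \<or> i = Suc h \<or> j = 0 \<or> j = Suc h")
    case True thus ?thesis using ij by (simp add: emb_index)
  next
    case False
    have "kappa h i = kappa h j \<longleftrightarrow> i = j" using kappa_facts[OF ij(1)] kappa_facts[OF ij(2)] False by metis
    thus ?thesis using ij False kappa_facts[OF ij(1)] kappa_facts[OF ij(2)] by (simp add: emb_index)
  qed
qed (auto simp: emb_def)

lemma col_emb:
  assumes i: "i < 2 * Suc h"
  shows "col (emb h Z) i $ 0 = (if i = 0 then 1 else 0)" "col (emb h Z) i $ Suc h = (if i = Suc h then 1 else 0)"
    "Z \<in> carrier_mat (2*h) (2*h) \<Longrightarrow> dv h (col (emb h Z) i) = (if i = 0 \<or> i = Suc h then 0\<^sub>v (2*h) else col Z (kappa h i))"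
proof -
  show "col (emb h Z) i $ 0 = (if i = 0 then 1 else 0)" using i by (simp add: emb_carrier[THEN carrier_matD(1)] emb_carrier[THEN carrier_matD(2)] emb_index)
  show "col (emb h Z) i $ Suc h = (if i = Suc h then 1 else 0)" using i by (simp add: emb_carrier[THEN carrier_matD(1)] emb_carrier[THEN carrier_matD(2)] emb_index)
  assume Z: "Z \<in> carrier_mat (2*h) (2*h)"
  show "dv h (col (emb h Z) i) = (if i = 0 \<or> i = Suc h then 0\<^sub>v (2*h) else col Z (kappa h i))"
  proof (rule eq_vecI)
    fix c assume "c < dim_vec (if i = 0 \<or> i = Suc h then 0\<^sub>v (2*h) else col Z (kappa h i))"
    hence c: "c < 2*h" using Z by (auto split: if_splits)
    have ic: "iota h c < 2 * Suc h" using iota_facts(1)[OF c] .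
    show "dv h (col (emb h Z) i) $ c = (if i = 0 \<or> i = Suc h then 0\<^sub>v (2*h) else col Z (kappa h i)) $ c"
      using c ic i Z kappa_facts[OF i] iota_facts[of c h]
      by (auto simp: dv_def emb_carrier[THEN carrier_matD(1)] emb_carrier[THEN carrier_matD(2)] emb_index)
  qed (insert Z, auto simp: dv_def)
qed

lemma om_zero_left: "om h (0\<^sub>v (2*h)) y = (0::'a::field)"
  unfolding om_def by (rule sum.neutral) auto

lemma om_zero_right: "om h x (0\<^sub>v (2*h)) = (0::'a::field)"
  unfolding om_def by (rule sum.neutral) auto

lemma emb_sympl:
  assumes Z: "Z \<in> carrier_mat (2*h) (2*h)" and sy: "sympl h 1 Z"
  shows "sympl (Suc h) 1 (emb h (Z :: 'a::field mat))"
proof -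
  have e: "transpose_mat Z * Jmat h * Z = Jmat h" using sy by (simp add: sympl_def)
  have E: "emb h Z \<in> carrier_mat (2 * Suc h) (2 * Suc h)" by (rule emb_carrier)
  have "transpose_mat (emb h Z) * Jmat (Suc h) * emb h Z = Jmat (Suc h)"
  proof (rule eq_matI)
    fix i j assume ij: "i < dim_row (Jmat (Suc h) :: 'a mat)" "j < dim_col (Jmat (Suc h) :: 'a mat)"
    hence ij: "i < 2 * Suc h" "j < 2 * Suc h" by auto
    have ci: "col (emb h Z) i \<in> carrier_vec (2 * Suc h)" and cj: "col (emb h Z) j \<in> carrier_vec (2 * Suc h)"
      using E ij by auto
    have "(transpose_mat (emb h Z) * Jmat (Suc h) * emb h Z) $$ (i,j) = om (Suc h) (col (emb h Z) i) (col (emb h Z) j)"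
      by (rule om_col[OF E E ij])
    also have "\<dots> = ((if i = 0 then 1 else 0) * (if j = Suc h then 1 else 0) - (if i = Suc h then 1 else 0) * (if j = 0 then 1 else 0)) +
       om h (if i = 0 \<or> i = Suc h then 0\<^sub>v (2*h) else col Z (kappa h i)) (if j = 0 \<or> j = Suc h then 0\<^sub>v (2*h) else col Z (kappa h j))"
      unfolding om_split[OF ci cj] col_emb[OF ij(1)] col_emb[OF ij(2)] col_emb(3)[OF ij(1) Z] col_emb(3)[OF ij(2) Z] ..
    also have "\<dots> = Jmat (Suc h) $$ (i,j)"
    proof (cases "i = 0 \<or> i = Suc h \<or> j = 0 \<or> j = Suc h")
      case True
      thus ?thesis using ij by (auto simp: om_zero_left om_zero_right Jmat_index pr_def)
    next
      case False
      note ki = kappa_facts[OF ij(1)] and kj = kappa_facts[OF ij(2)]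
      have "om h (col Z (kappa h i)) (col Z (kappa h j)) = (transpose_mat Z * Jmat h * Z) $$ (kappa h i, kappa h j)"
        using om_col[OF Z Z, of "kappa h i" "kappa h j"] ki kj False by simp
      also have "\<dots> = Jmat h $$ (kappa h i, kappa h j)" unfolding e ..
      also have "\<dots> = Jmat (Suc h) $$ (iota h (kappa h i), iota h (kappa h j))" using J_iota ki kj False by metis
      also have "\<dots> = Jmat (Suc h) $$ (i,j)" using ki kj False by simp
      finally show ?thesis using False by simp
    qed
    finally show "(transpose_mat (emb h Z) * Jmat (Suc h) * emb h Z) $$ (i,j) = Jmat (Suc h) $$ (i,j)" .
  qed (insert E, auto)
  thus ?thesis using E by (simp add: sympl_def)
qed

lemma cpm_delete:
  assumes A: "A \<in> carrier_mat (Suc n) (Suc n)" and k: "k < Suc n"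
  shows "mat_delete (char_poly_matrix A) k k = char_poly_matrix (mat_delete A k k)"
  by (rule eq_matI, insert A k, auto simp: mat_delete_def char_poly_matrix_def)

lemma cp_col:
  assumes A: "A \<in> carrier_mat (Suc n) (Suc n)" and k: "k < Suc n"
    and z: "\<And>i. i < Suc n \<Longrightarrow> i \<noteq> k \<Longrightarrow> A $$ (i,k) = 0"
  shows "char_poly A = [:- A $$ (k,k), 1:] * char_poly (mat_delete A k k :: 'a::field mat)"
proof -
  have C: "char_poly_matrix A \<in> carrier_mat (Suc n) (Suc n)" using A by simp
  have "char_poly A = (\<Sum>i<Suc n. char_poly_matrix A $$ (i,k) * cofactor (char_poly_matrix A) i k)"
    unfolding char_poly_def by (rule laplace_expansion_column[OF C k])
  also have "\<dots> = char_poly_matrix A $$ (k,k) * cofactor (char_poly_matrix A) k k"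
  proof (rule trans[OF _ sum_single[OF k, of "\<lambda>i. char_poly_matrix A $$ (i,k) * cofactor (char_poly_matrix A) i k"]])
    show "(\<Sum>i<Suc n. char_poly_matrix A $$ (i,k) * cofactor (char_poly_matrix A) i k) =
      (\<Sum>i\<in>{0..<Suc n}. char_poly_matrix A $$ (i,k) * cofactor (char_poly_matrix A) i k)" by (simp add: atLeast0LessThan)
    fix i assume "i < Suc n" "i \<noteq> k" thus "char_poly_matrix A $$ (i,k) * cofactor (char_poly_matrix A) i k = 0"
      using z A k by (simp add: char_poly_matrix_def)
  qed
  also have "\<dots> = [:- A $$ (k,k), 1:] * char_poly (mat_delete A k k)"
    unfolding cofactor_def cpm_delete[OF A k] char_poly_def using A k by (simp add: char_poly_matrix_def)
  finally show ?thesis .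
qed

lemma cp_row:
  assumes A: "A \<in> carrier_mat (Suc n) (Suc n)" and k: "k < Suc n"
    and z: "\<And>j. j < Suc n \<Longrightarrow> j \<noteq> k \<Longrightarrow> A $$ (k,j) = 0"
  shows "char_poly A = [:- A $$ (k,k), 1:] * char_poly (mat_delete A k k :: 'a::field mat)"
proof -
  have C: "char_poly_matrix A \<in> carrier_mat (Suc n) (Suc n)" using A by simp
  have "char_poly A = (\<Sum>j<Suc n. char_poly_matrix A $$ (k,j) * cofactor (char_poly_matrix A) k j)"
    unfolding char_poly_def by (rule laplace_expansion_row[OF C k])
  also have "\<dots> = char_poly_matrix A $$ (k,k) * cofactor (char_poly_matrix A) k k"
  proof (rule trans[OF _ sum_single[OF k, of "\<lambda>j. char_poly_matrix A $$ (k,j) * cofactor (char_poly_matrix A) k j"]])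
    show "(\<Sum>j<Suc n. char_poly_matrix A $$ (k,j) * cofactor (char_poly_matrix A) k j) =
      (\<Sum>j\<in>{0..<Suc n}. char_poly_matrix A $$ (k,j) * cofactor (char_poly_matrix A) k j)" by (simp add: atLeast0LessThan)
    fix j assume "j < Suc n" "j \<noteq> k" thus "char_poly_matrix A $$ (k,j) * cofactor (char_poly_matrix A) k j = 0"
      using z A k by (simp add: char_poly_matrix_def)
  qed
  also have "\<dots> = [:- A $$ (k,k), 1:] * char_poly (mat_delete A k k)"
    unfolding cofactor_def cpm_delete[OF A k] char_poly_def using A k by (simp add: char_poly_matrix_def)
  finally show ?thesis .
qed

lemma dm_delete:
  assumes V: "V \<in> carrier_mat (2 * Suc h) (2 * Suc h)"
  shows "mat_delete (mat_delete V 0 0) h h = dm h V"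
  by (rule eq_matI, insert V, auto simp: mat_delete_def dm_def iota_def)


lemma om_e0:
  assumes y: "y \<in> carrier_vec (2*g)" and g: "g \<ge> 1"
  shows "om g (unit_vec (2*g) 0) y = y $ g"
proof -
  have "om g (unit_vec (2*g) 0) y = - om g y (unit_vec (2*g) 0)" by (rule om_antisym)
  also have "\<dots> = y $ g" using g by (subst om_unit_right, auto)
  finally show ?thesis .
qed

lemma om_smult_left:
  assumes x: "x \<in> carrier_vec (2*g)"
  shows "om g (a \<cdot>\<^sub>v x) y = a * om g x (y :: 'a::field vec)"
  unfolding om_def using x by (simp add: sum_distrib_left algebra_simps)

lemma tri_main:
  fixes M :: "'a::field mat"
  shows "M \<in> carrier_mat (2*g) (2*g) \<Longrightarrow> \<mu> \<noteq> 0 \<Longrightarrow> sympl g \<mu> M \<Longrightarrow>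
    (\<forall>x. poly (map_poly to_ac (char_poly M)) x = 0 \<longrightarrow> x \<in> range to_ac) \<Longrightarrow>
    \<exists>P Q. sympl g 1 P \<and> is_inverse_mat (2*g) P Q \<and> shape g (Q * M * P)"
proof (induct g arbitrary: M)
  case 0
  have "sympl 0 1 (1\<^sub>m 0 :: 'a mat)" unfolding sympl_def by (auto intro!: eq_matI)
  moreover have "is_inverse_mat (2*0) (1\<^sub>m 0) (1\<^sub>m 0 :: 'a mat)" unfolding is_inverse_mat_def by auto
  moreover have "shape 0 (1\<^sub>m 0 * M * 1\<^sub>m 0)" unfolding shape_def by auto
  ultimately show ?case by blast
next
  case (Suc h M)
  let ?g = "Suc h"
  let ?n = "2 * Suc h"
  have Mc: "M \<in> carrier_mat ?n ?n" and mu: "\<mu> \<noteq> 0" and syM: "sympl ?g \<mu> M"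
    and roots: "\<forall>x. poly (map_poly to_ac (char_poly M)) x = 0 \<longrightarrow> x \<in> range to_ac" using Suc.prems by auto
  have g1: "?g \<ge> 1" by simp
  have "Polynomial.degree (map_poly (to_ac :: 'a \<Rightarrow> 'a alg_closure) (char_poly M)) = ?n"
    using degree_monic_char_poly[OF Mc] by simp
  hence "\<exists>x. poly (map_poly (to_ac :: 'a \<Rightarrow> 'a alg_closure) (char_poly M)) x = 0"
    by (intro alg_closed_imp_poly_has_root, simp)
  then obtain x where x: "poly (map_poly (to_ac :: 'a \<Rightarrow> 'a alg_closure) (char_poly M)) x = 0" by blast
  then obtain lam where "x = to_ac lam" using roots by blast
  with x have "to_ac (poly (char_poly M) lam) = (0 :: 'a alg_closure)" by simp
  hence "poly (char_poly M) lam = 0" by simp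
  hence "eigenvalue M lam" using eigenvalue_root_char_poly[OF Mc] by simp
  then obtain v where v: "v \<in> carrier_vec ?n" "v \<noteq> 0\<^sub>v ?n" "M *\<^sub>v v = lam \<cdot>\<^sub>v v"
    unfolding eigenvalue_def eigenvector_def using Mc by auto
  obtain T where T: "sympl ?g 1 T" "T *\<^sub>v unit_vec ?n 0 = v" using sp_transitive[OF g1 v(1,2)] by blast
  let ?Ti = "sinv ?g 1 T"
  have Tc: "T \<in> carrier_mat ?n ?n" using T by (simp add: sympl_def)
  have Tic: "?Ti \<in> carrier_mat ?n ?n" by (rule sinv_carrier[OF Tc])
  have TiT: "?Ti * T = 1\<^sub>m ?n" and TTi: "T * ?Ti = 1\<^sub>m ?n" using sinv_left[OF T(1)] sinv_right[OF T(1)] by auto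
  have invT: "is_inverse_mat ?n T ?Ti" unfolding is_inverse_mat_def using Tc Tic TiT TTi by auto
  define M' where "M' = ?Ti * M * T"
  have M'c: "M' \<in> carrier_mat ?n ?n" unfolding M'_def using Tc Tic Mc by simp
  have syM': "sympl ?g \<mu> M'" unfolding M'_def
    by (rule sympl_conj[OF sympl_inverse[OF T(1) _ invT, simplified] _ _ syM], simp, unfold is_inverse_mat_def, insert Tc Tic TiT TTi, auto)
  let ?e = "unit_vec ?n 0 :: 'a vec"
  have e: "?e \<in> carrier_vec ?n" by simp
  have M'e: "M' *\<^sub>v ?e = lam \<cdot>\<^sub>v ?e"
  proof -
    have "M' *\<^sub>v ?e = (?Ti * M) *\<^sub>v (T *\<^sub>v ?e)" unfolding M'_def
      by (rule assoc_mult_mat_vec, insert Tc Tic Mc e, auto)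
    also have "\<dots> = ?Ti *\<^sub>v (M *\<^sub>v (T *\<^sub>v ?e))"
      by (rule assoc_mult_mat_vec, insert Tc Tic Mc e, auto)
    also have "\<dots> = ?Ti *\<^sub>v (lam \<cdot>\<^sub>v v)" unfolding T(2) v(3) ..
    also have "\<dots> = lam \<cdot>\<^sub>v (?Ti *\<^sub>v v)" by (rule mult_mat_vec[OF Tic v(1)])
    also have "?Ti *\<^sub>v v = (?Ti * T) *\<^sub>v ?e" unfolding T(2)[symmetric] using Tic Tc e by simp
    also have "\<dots> = ?e" unfolding TiT using e by simp
    finally show ?thesis .
  qed
  have col0: "M' $$ (i,0) = (if i = 0 then lam else 0)" if i: "i < ?n" for i
  proof -
    have "(M' *\<^sub>v ?e) $ i = M' $$ (i,0)" using M'c i by simp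
    hence "lam * (if i = 0 then 1 else 0) = M' $$ (i,0)" unfolding M'e using i by simp
    thus ?thesis by (cases "i = 0") auto
  qed
  have rowg: "lam * M' $$ (?g, j) = (if j = ?g then \<mu> else 0)" if j: "j < ?n" for j
  proof -
    have c0: "col M' 0 = lam \<cdot>\<^sub>v ?e" by (rule eq_vecI, insert M'c col0, auto)
    have "(transpose_mat M' * Jmat ?g * M') $$ (0,j) = om ?g (col M' 0) (col M' j)"
      by (rule om_col[OF M'c M'c _ j], simp)
    also have "\<dots> = lam * M' $$ (?g, j)" unfolding c0 om_smult_left[OF e] using om_e0[of "col M' j" ?g] M'c j by simp
    finally have "lam * M' $$ (?g, j) = (\<mu> \<cdot>\<^sub>m Jmat ?g) $$ (0,j)" using syM' by (simp add: sympl_def)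
    thus ?thesis using j by (simp add: Jmat_index pr_def)
  qed
  have lam0: "lam \<noteq> 0" using rowg[of ?g] mu by auto
  have rowg0: "M' $$ (?g, j) = 0" if "j < ?n" "j \<noteq> ?g" for j using rowg[OF that(1)] that lam0 by simp
  define N where "N = dm h M'"
  have Nc: "N \<in> carrier_mat (2*h) (2*h)" unfolding N_def by (rule dm_carrier)
  have syN: "sympl h \<mu> N" unfolding N_def by (rule sympl_dm[OF M'c syM'], rule rowg0, auto)
  have cpM': "char_poly M' = [:- lam, 1:] * ([:- M' $$ (?g, ?g), 1:] * char_poly N)"
  proof -
    have M'c': "M' \<in> carrier_mat (Suc (Suc (2*h))) (Suc (Suc (2*h)))" using M'c by simp
    have "char_poly M' = [:- M' $$ (0,0), 1:] * char_poly (mat_delete M' 0 0)"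
      by (rule cp_col[OF M'c'], simp, insert col0, auto)
    also have "char_poly (mat_delete M' 0 0) = [:- mat_delete M' 0 0 $$ (h,h), 1:] * char_poly (mat_delete (mat_delete M' 0 0) h h)"
    proof (rule cp_row)
      show "mat_delete M' 0 0 \<in> carrier_mat (Suc (2*h)) (Suc (2*h))" using M'c by (simp add: mat_delete_def)
      show "h < Suc (2*h)" by simp
      fix j assume "j < Suc (2*h)" "j \<noteq> h"
      thus "mat_delete M' 0 0 $$ (h,j) = 0" using M'c rowg0[of "Suc j"] by (simp add: mat_delete_def)
    qed
    also have "mat_delete M' 0 0 $$ (h,h) = M' $$ (?g, ?g)" using M'c by (simp add: mat_delete_def)
    also have "mat_delete (mat_delete M' 0 0) h h = N" unfolding N_def by (rule dm_delete[OF M'c])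
    finally show ?thesis using col0[of 0] by simp
  qed
  have cpM: "char_poly M = char_poly M'" unfolding M'_def
    by (rule char_poly_similar[symmetric], rule similar_matI[where n="?n" and P="?Ti" and Q=T], insert Tc Tic Mc TiT TTi, auto)
  have rootsN: "\<forall>x. poly (map_poly to_ac (char_poly N)) x = 0 \<longrightarrow> x \<in> range to_ac"
  proof (intro allI impI)
    fix x :: "'a alg_closure" assume "poly (map_poly to_ac (char_poly N)) x = 0"
    hence "poly (map_poly to_ac (char_poly M)) x = 0" unfolding cpM cpM' to_ac_poly.hom_mult poly_mult by simp
    thus "x \<in> range to_ac" using roots by blast
  qed
  obtain P1 Q1 where P1: "sympl h 1 P1" "is_inverse_mat (2*h) P1 Q1" "shape h (Q1 * N * P1)"
    using Suc.hyps[OF Nc mu syN rootsN] by blast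
  have P1c: "P1 \<in> carrier_mat (2*h) (2*h)" and Q1c: "Q1 \<in> carrier_mat (2*h) (2*h)"
    and P1Q1: "P1 * Q1 = 1\<^sub>m (2*h)" and Q1P1: "Q1 * P1 = 1\<^sub>m (2*h)" using P1(2) unfolding is_inverse_mat_def by auto
  have syQ1: "sympl h 1 Q1" using sympl_inverse[OF P1(1) _ P1(2)] by simp
  define P where "P = T * emb h P1"
  define Q where "Q = emb h Q1 * ?Ti"
  have Ec: "emb h P1 \<in> carrier_mat ?n ?n" "emb h Q1 \<in> carrier_mat ?n ?n" by (rule emb_carrier)+
  have syP: "sympl ?g 1 P" unfolding P_def using sympl_mult[OF T(1) emb_sympl[OF P1c P1(1)]] by simp
  have PQ: "P * Q = 1\<^sub>m ?n"
  proof -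
    have "P * Q = T * (emb h P1 * emb h Q1) * ?Ti" unfolding P_def Q_def using Tc Tic Ec
      by (simp add: assoc_mult_mat[of _ ?n ?n _ ?n _ ?n])
    also have "emb h P1 * emb h Q1 = 1\<^sub>m ?n" unfolding emb_mult[OF P1c Q1c] P1Q1 emb_one ..
    finally show ?thesis using Tc TTi by simp
  qed
  have QP: "Q * P = 1\<^sub>m ?n"
  proof -
    have "Q * P = emb h Q1 * (?Ti * T) * emb h P1" unfolding P_def Q_def using Tc Tic Ec
      by (simp add: assoc_mult_mat[of _ ?n ?n _ ?n _ ?n])
    also have "\<dots> = emb h Q1 * emb h P1" unfolding TiT using Ec by simp
    also have "\<dots> = 1\<^sub>m ?n" unfolding emb_mult[OF Q1c P1c] Q1P1 emb_one ..
    finally show ?thesis .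
  qed
  have Pc: "P \<in> carrier_mat ?n ?n" and Qc: "Q \<in> carrier_mat ?n ?n" unfolding P_def Q_def using Tc Tic Ec by auto
  have inv: "is_inverse_mat ?n P Q" unfolding is_inverse_mat_def using Pc Qc PQ QP by auto
  have R: "Q * M * P = (emb h Q1 * M') * emb h P1" unfolding P_def Q_def M'_def using Tc Tic Ec Mc
    by (simp add: assoc_mult_mat[of _ ?n ?n _ ?n _ ?n])
  define L where "L = emb h Q1 * M'"
  have Lc: "L \<in> carrier_mat ?n ?n" unfolding L_def using Ec M'c by simp
  have L: "L $$ (i,j) = (if i = 0 \<or> i = ?g then M' $$ (i,j) else (\<Sum>c<2*h. Q1 $$ (kappa h i, c) * M' $$ (iota h c, j)))"
    if "i < ?n" "j < ?n" for i j unfolding L_def by (rule emb_mult_left[OF M'c that])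
  have Rx: "(L * emb h P1) $$ (i,j) = (if j = 0 \<or> j = ?g then L $$ (i,j) else (\<Sum>d<2*h. L $$ (i, iota h d) * P1 $$ (d, kappa h j)))"
    if "i < ?n" "j < ?n" for i j by (rule emb_mult_right[OF Lc that])
  have Rcol0: "(L * emb h P1) $$ (i,0) = (if i = 0 then lam else 0)" if i: "i < ?n" for i
    using i unfolding Rx[OF i, of 0, simplified] L[OF i, of 0, simplified] by (auto simp: col0)
  have Rrowg: "(L * emb h P1) $$ (?g,j) = 0" if j: "j < ?n" "j \<noteq> ?g" for j
  proof (cases "j = 0")
    case True thus ?thesis using Rcol0[of ?g] by simp
  next
    case False
    have "(L * emb h P1) $$ (?g, j) = (\<Sum>d<2*h. L $$ (?g, iota h d) * P1 $$ (d, kappa h j))"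
      using Rx[of ?g j] j False by simp
    also have "\<dots> = 0" by (intro sum.neutral ballI, simp add: L rowg0)
    finally show ?thesis .
  qed
  have Rmid: "(L * emb h P1) $$ (iota h a, iota h b) = (Q1 * N * P1) $$ (a,b)" if ab: "a < 2*h" "b < 2*h" for a b
  proof -
    have "(L * emb h P1) $$ (iota h a, iota h b) = (\<Sum>d<2*h. L $$ (iota h a, iota h d) * P1 $$ (d, b))"
      using ab by (simp add: Rx)
    also have "\<dots> = (\<Sum>d<2*h. (\<Sum>c<2*h. Q1 $$ (a, c) * N $$ (c, d)) * P1 $$ (d, b))"
      using ab by (intro sum.cong, auto simp: L N_def dm_def)
    also have "\<dots> = (Q1 * N * P1) $$ (a,b)"
      using conj_entry[OF Q1c Nc P1c ab] by (simp add: sum_distrib_right atLeast0LessThan)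
    finally show ?thesis .
  qed
  have shR: "shape ?g (L * emb h P1)" unfolding shape_def
  proof (intro allI impI conjI)
    fix i j assume ij: "i < 2 * ?g" "j < 2 * ?g"
    have sh1: "\<And>a b. a < 2*h \<Longrightarrow> b < 2*h \<Longrightarrow> (a < h \<and> b < a \<longrightarrow> (Q1 * N * P1) $$ (a,b) = 0) \<and>
         (h \<le> a \<and> b < h \<longrightarrow> (Q1 * N * P1) $$ (a,b) = 0) \<and> (h \<le> a \<and> a < b \<longrightarrow> (Q1 * N * P1) $$ (a,b) = 0)"
      using P1(3) unfolding shape_def by blast
    have mid: "(L * emb h P1) $$ (i,j) = (Q1 * N * P1) $$ (kappa h i, kappa h j)" if "i \<noteq> 0" "i \<noteq> ?g" "j \<noteq> 0" "j \<noteq> ?g"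
      using Rmid[of "kappa h i" "kappa h j"] kappa_facts[OF ij(1)] kappa_facts[OF ij(2)] that by simp
    show "(L * emb h P1) $$ (i,j) = 0" if "i < ?g \<and> j < i"
    proof (cases "j = 0")
      case True thus ?thesis using Rcol0[OF ij(1)] that by simp
    next
      case False
      thus ?thesis using mid that ij sh1[OF kappa_facts(2)[OF ij(1)] kappa_facts(2)[OF ij(2)]] unfolding kappa_def by auto
    qed
    show "(L * emb h P1) $$ (i,j) = 0" if "?g \<le> i \<and> j < ?g"
    proof (cases "j = 0 \<or> i = ?g")
      case True thus ?thesis using Rcol0[OF ij(1)] Rrowg[OF ij(2)] that by auto
    next
      case False
      thus ?thesis using mid that ij sh1[OF kappa_facts(2)[OF ij(1)] kappa_facts(2)[OF ij(2)]] unfolding kappa_def by auto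
    qed
    show "(L * emb h P1) $$ (i,j) = 0" if "?g \<le> i \<and> i < j"
    proof (cases "i = ?g")
      case True thus ?thesis using Rrowg[OF ij(2)] that by auto
    next
      case False
      thus ?thesis using mid that ij sh1[OF kappa_facts(2)[OF ij(1)] kappa_facts(2)[OF ij(2)]] unfolding kappa_def by auto
    qed
  qed
  have "shape ?g (Q * M * P)" unfolding R using shR unfolding L_def .
  thus ?case using syP inv by blast
qed

lemma conj_to_B2g:
  assumes g: "g \<ge> 1" and M: "M \<in> GSp g" and es: "eigen_split g (M :: 'a::field mat)"
  shows "\<exists>P\<in>GSp g. \<exists>Q. is_inverse_mat (2*g) P Q \<and> P * M * Q \<in> B2g g"
proof -
  obtain \<mu> where mu: "\<mu> \<noteq> 0" "sympl g \<mu> M" using M unfolding GSp_iff by blast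
  have Mc: "M \<in> carrier_mat (2*g) (2*g)" using mu by (simp add: sympl_def)
  obtain lam :: "nat \<Rightarrow> 'a alg_closure" where lam: "map_poly to_ac (char_poly M) =
        (\<Prod>i<g. [:- lam i, 1:] * [:- (to_ac (multiplicator g M) * inverse (lam i)), 1:])"
      "\<And>i. i < g \<Longrightarrow> lam i \<in> to_ac ` (UNIV - {0})" using es unfolding eigen_split_def by blast
  have roots: "\<forall>x. poly (map_poly to_ac (char_poly M)) x = 0 \<longrightarrow> x \<in> range to_ac"
  proof (intro allI impI)
    fix x assume "poly (map_poly to_ac (char_poly M)) x = 0"
    hence "(\<Prod>i<g. poly ([:- lam i, 1:] * [:- (to_ac (multiplicator g M) * inverse (lam i)), 1:]) x) = 0"
      unfolding lam(1) poly_prod .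
    then obtain i where i: "i < g" and "poly ([:- lam i, 1:] * [:- (to_ac (multiplicator g M) * inverse (lam i)), 1:]) x = 0"
      by (auto simp: prod_zero_iff)
    hence "poly [:- lam i, 1:] x * poly [:- (to_ac (multiplicator g M) * inverse (lam i)), 1:] x = 0"
      by (simp only: poly_mult)
    hence "poly [:- lam i, 1:] x = 0 \<or> poly [:- (to_ac (multiplicator g M) * inverse (lam i)), 1:] x = 0"
      by (simp only: mult_eq_0_iff)
    hence x: "x = lam i \<or> x = to_ac (multiplicator g M) * inverse (lam i)" by auto
    obtain l where l: "lam i = to_ac l" using lam(2)[OF i] by blast
    show "x \<in> range to_ac"
    proof (cases "x = lam i")
      case True thus ?thesis using l by simp
    next
      case False
      hence "x = to_ac (multiplicator g M * inverse l)" using x l by simp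
      thus ?thesis by blast
    qed
  qed
  obtain P Q where PQ: "sympl g 1 P" "is_inverse_mat (2*g) P Q" "shape g (Q * M * P)"
    using tri_main[OF Mc mu(1,2) roots] by blast
  have syQ: "sympl g 1 Q" using sympl_inverse[OF PQ(1) _ PQ(2)] by simp
  have invQ: "is_inverse_mat (2*g) Q P" using PQ(2) unfolding is_inverse_mat_def by auto
  have sy: "sympl g \<mu> (Q * M * P)" by (rule sympl_conj[OF syQ _ invQ mu(2)], simp)
  have "Q * M * P \<in> B2g g" by (rule sympl_shape_B2g[OF sy mu(1) PQ(3)])
  moreover have "Q \<in> GSp g" unfolding GSp_iff using syQ by (intro exI[of _ 1], simp)
  ultimately show ?thesis using invQ by blast
qed

theorem proposition12:
  fixes g :: nat and t :: int and z :: real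
  assumes "g \<ge> 1"
    and "Factorial_Ring.prime (card (UNIV :: 'a set))"
    and "\<not> card (UNIV :: 'a set) dvd 2 * g"
    and "z > 0"
  shows
    "(Css g t \<noteq> ({} :: 'a::{finite, field} mat set) \<and> Css_le g z \<noteq> ({} :: 'a mat set) \<and>
      conj_stable g (GSp g) (Css g t :: 'a mat set) \<and> conj_stable g (GSp g) (Css_le g z :: 'a mat set))
   \<and> (CB g t \<noteq> ({} :: 'a mat set) \<and> CB_le g z \<noteq> ({} :: 'a mat set) \<and>
      conj_stable g (B2g g) (CB g t :: 'a mat set) \<and> conj_stable g (B2g g) (CB_le g z :: 'a mat set))
   \<and> (\<forall>M \<in> (Css g t \<union> Css_le g z :: 'a mat set). \<exists>P \<in> GSp g. \<exists>Q.
        is_inverse_mat (2*g) P Q \<and> P * M * Q \<in> B2g g)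
   \<and> (\<forall>U \<in> (U2g g :: 'a mat set). \<forall>M \<in> CB g t. U * M \<in> CB g t)
   \<and> (\<forall>U \<in> (U'2g g :: 'a mat set). \<forall>M \<in> CB g 0. U * M \<in> CB g 0)
   \<and> (\<forall>U \<in> (U2g g :: 'a mat set). \<forall>M \<in> CB_le g z. U * M \<in> CB_le g z)"
proof -
  note g = assms(1)
  obtain D1 :: "'a mat" where D1: "D1 \<in> Css g t" "D1 \<in> CB g t" using witness_t[OF assms(1-3)] by blast
  obtain D0 :: "'a mat" where D0: "D0 \<in> Css g 0" "D0 \<in> CB g 0" using witness_t[OF assms(1-3)] by blast
  have z0: "\<bar>real_of_int 0\<bar> \<le> z" using assms(4) by simp
  have Css_le_iff: "M \<in> Css_le g z \<longleftrightarrow> (\<exists>t'. \<bar>real_of_int t'\<bar> \<le> z \<and> M \<in> Css g t')" for M :: "'a mat"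
    unfolding Css_le_def by auto
  have CB_le_iff: "M \<in> CB_le g z \<longleftrightarrow> (\<exists>t'. \<bar>real_of_int t'\<bar> \<le> z \<and> M \<in> CB g t')" for M :: "'a mat"
    unfolding CB_le_def Cset_le_def CB_def by auto
  have cssc: "P * M * Q \<in> Css g t'" if "P \<in> GSp g" "is_inverse_mat (2*g) P Q" "M \<in> Css g t'" for P Q M t'
  proof -
    have Pc: "P \<in> carrier_mat (2*g) (2*g)" and Qc: "Q \<in> carrier_mat (2*g) (2*g)"
      and PQ: "P * Q = 1\<^sub>m (2*g)" and QP: "Q * P = 1\<^sub>m (2*g)" using that(2) unfolding is_inverse_mat_def by auto
    have MC: "M \<in> Cset g t'" and ss: "semisimple M" using that(3) unfolding Css_def by auto
    have Mc: "M \<in> carrier_mat (2*g) (2*g)" using MC unfolding Cset_def GSp_def by auto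
    show ?thesis unfolding Css_def using Cset_conj[OF g that(1,2) MC] semisimple_conj[OF Pc Mc Qc QP PQ ss] by simp
  qed
  have cbc: "P * M * Q \<in> CB g t'" if "P \<in> B2g g" "is_inverse_mat (2*g) P Q" "M \<in> CB g t'" for P Q M t'
  proof -
    have "Q \<in> B2g g" by (rule B2g_inverse[OF that(1,2)])
    hence "P * M * Q \<in> B2g g" using that B2g_mult unfolding CB_def by blast
    moreover have "P * M * Q \<in> Cset g t'" using Cset_conj[OF g B2g_GSp[OF that(1)] that(2)] that(3) unfolding CB_def by blast
    ultimately show ?thesis unfolding CB_def by blast
  qed
  have part1: "Css g t \<noteq> ({} :: 'a mat set) \<and> Css_le g z \<noteq> ({} :: 'a mat set) \<and>
      conj_stable g (GSp g) (Css g t :: 'a mat set) \<and> conj_stable g (GSp g) (Css_le g z :: 'a mat set)"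
    unfolding conj_stable_def using D1 D0 z0 cssc Css_le_iff by blast
  have part2: "CB g t \<noteq> ({} :: 'a mat set) \<and> CB_le g z \<noteq> ({} :: 'a mat set) \<and>
      conj_stable g (B2g g) (CB g t :: 'a mat set) \<and> conj_stable g (B2g g) (CB_le g z :: 'a mat set)"
    unfolding conj_stable_def using D1 D0 z0 cbc CB_le_iff by blast
  have part3: "\<forall>M \<in> (Css g t \<union> Css_le g z :: 'a mat set). \<exists>P \<in> GSp g. \<exists>Q.
        is_inverse_mat (2*g) P Q \<and> P * M * Q \<in> B2g g"
  proof
    fix M :: "'a mat" assume "M \<in> Css g t \<union> Css_le g z"
    then obtain t' where "M \<in> Css g t'" using Css_le_iff by blast
    hence "M \<in> GSp g" "eigen_split g M" unfolding Css_def Cset_def by auto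
    thus "\<exists>P \<in> GSp g. \<exists>Q. is_inverse_mat (2*g) P Q \<and> P * M * Q \<in> B2g g" by (rule conj_to_B2g[OF g])
  qed
  have part4: "\<forall>U \<in> (U2g g :: 'a mat set). \<forall>M \<in> CB g t. U * M \<in> CB g t"
  proof (intro ballI)
    fix U M :: "'a mat" assume U: "U \<in> U2g g" and M: "M \<in> CB g t"
    show "U * M \<in> CB g t" using mult_Cset[OF g U2g_props(1)[OF U] M U2g_props(2)[OF U]] by simp
  qed
  have part5: "\<forall>U \<in> (U'2g g :: 'a mat set). \<forall>M \<in> CB g 0. U * M \<in> CB g 0"
  proof (intro ballI)
    fix U M :: "'a mat" assume U: "U \<in> U'2g g" and M: "M \<in> CB g 0"
    obtain c where "\<forall>i < 2*g. U $$ (i,i) = c" using U'2g_props(2)[OF g U] by blast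
    thus "U * M \<in> CB g 0" using mult_Cset[OF g U'2g_props(1)[OF g U] M, of c 0] by simp
  qed
  have part6: "\<forall>U \<in> (U2g g :: 'a mat set). \<forall>M \<in> CB_le g z. U * M \<in> CB_le g z"
  proof (intro ballI)
    fix U M :: "'a mat" assume U: "U \<in> U2g g" and M: "M \<in> CB_le g z"
    then obtain t' where t': "\<bar>real_of_int t'\<bar> \<le> z" "M \<in> CB g t'" using CB_le_iff by blast
    have "U * M \<in> CB g t'" using mult_Cset[OF g U2g_props(1)[OF U] t'(2) U2g_props(2)[OF U]] by simp
    thus "U * M \<in> CB_le g z" using CB_le_iff t'(1) by blast
  qed
  show ?thesis using part1 part2 part3 part4 part5 part6 by blast
qed

end
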